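(* Let $a,x,y\in(0,1)$ with $ay<x$, and let $W_{(\alpha,\beta)}(a,x,y)=(T_1,T_2)$ be the 2-variable weighted shift defined below. Then $W_{(\alpha,\beta)}(a,x,y)$ is (jointly) semi-hyponormal if and only if $$a^2\le\frac{x\left(4x^2-x^4+4x^3y+4y^2-6x^2y^2+4xy^3-y^4\right)}{4y(x^2+y^2)}$$ and $$\sqrt{\frac{(x^2+y^2)(x+a^2y)}{x}}\ \ge\ \frac{(x+y)^2}{2}+\sqrt{\frac{(x+a^2y)(x-y)^4}{4(x-a^2y)}}.$$
   Context: A 2-variable weighted shift $W_{(\alpha,\beta)}=(T_1,T_2)$ on $\ell^2(\mathbb{Z}_+^2)$ (orthonormal basis $\{e_{\mathbf{k}}\}$) is given by $T_1e_{\mathbf{k}}=\alpha_{\mathbf{k}}e_{\mathbf{k}+(1,0)}$, $T_2e_{\mathbf{k}}=\beta_{\mathbf{k}}e_{\mathbf{k}+(0,1)}$ for bounded positive weights. $W_{(\alpha,\beta)}(a,x,y)$ is the one with $\alpha_{(0,0)}=x$, $\alpha_{(0,k_2)}=a$ for $k_2\ge1$, $\alpha_{(k_1,k_2)}=1$ for $k_1\ge1,k_2\ge0$; $\beta_{(0,0)}=y$, $\beta_{(k_1,0)}=ay/x$ for $k_1\ge1$, and $\beta_{(k_1,k_2)}=1$ for all other $(k_1,k_2)$ (i.e. $k_2\ge1$); it is a commuting pair. For a commuting pair $(T_1,T_2)$ let $L=\begin{pmatrix} T_1^*T_1 & T_2^*T_1\\ T_1^*T_2 & T_2^*T_2\end{pmatrix}$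 and $R=\begin{pmatrix} T_1T_1^* & T_1T_2^*\\ T_2T_1^* & T_2T_2^*\end{pmatrix}$ on $\mathcal{H}\oplus\mathcal{H}$. The pair is semi-hyponormal if $L\ge0$ and $\sqrt{L}\ge\sqrt{R}$ (positive square roots). *)

theory Defs
  imports "HOL-Analysis.Analysis"
begin

definition ell2 :: "('i \<Rightarrow> complex) set" where
  "ell2 = {f. (\<lambda>i. (cmod (f i))\<^sup>2) summable_on UNIV}"

definition ip :: "('i \<Rightarrow> complex) \<Rightarrow> ('i \<Rightarrow> complex) \<Rightarrow> complex" where
  "ip f g = infsum (\<lambda>i. f i * cnj (g i)) UNIV"

definition nsq :: "('i \<Rightarrow> complex) \<Rightarrow> real" where
  "nsq f = infsum (\<lambda>i. (cmod (f i))\<^sup>2) UNIV"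

text \<open>Operators are functions on all of \<open>'i \<Rightarrow> complex\<close>; only their behaviour on ell2 matters.\<close>

definition bounded_op :: "(('i \<Rightarrow> complex) \<Rightarrow> ('j \<Rightarrow> complex)) \<Rightarrow> bool" where
  "bounded_op A \<longleftrightarrow>
     (\<forall>f\<in>ell2. A f \<in> ell2) \<and>
     (\<forall>f\<in>ell2. \<forall>g\<in>ell2. A (\<lambda>i. f i + g i) = (\<lambda>i. A f i + A g i)) \<and>
     (\<forall>f\<in>ell2. \<forall>c. A (\<lambda>i. c * f i) = (\<lambda>i. c * A f i)) \<and>
     (\<exists>C. \<forall>f\<in>ell2. nsq (A f) \<le> C * nsq f)"

text \<open>Hilbert space adjoint (normalised to be 0 outside ell2, so that it is unique).\<close>

definition adj :: "(('i \<Rightarrow> complex) \<Rightarrow> ('j \<Rightarrow> complex)) \<Rightarrow> (('j \<Rightarrow> complex) \<Rightarrow> ('i \<Rightarrow> complex))" where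
  "adj A = (THE B. (\<forall>g. g \<notin> ell2 \<longrightarrow> B g = (\<lambda>_. 0)) \<and> (\<forall>g\<in>ell2. B g \<in> ell2) \<and>
                   (\<forall>f\<in>ell2. \<forall>g\<in>ell2. ip (A f) g = ip f (B g)))"

definition positive_op :: "(('i \<Rightarrow> complex) \<Rightarrow> ('i \<Rightarrow> complex)) \<Rightarrow> bool" where
  "positive_op A \<longleftrightarrow> bounded_op A \<and>
     (\<forall>f\<in>ell2. Im (ip (A f) f) = 0 \<and> Re (ip (A f) f) \<ge> 0)"

definition op_le :: "(('i \<Rightarrow> complex) \<Rightarrow> ('i \<Rightarrow> complex)) \<Rightarrow> (('i \<Rightarrow> complex) \<Rightarrow> ('i \<Rightarrow> complex)) \<Rightarrow> bool" where
  "op_le A B \<longleftrightarrow> positive_op (\<lambda>f i. B f i - A f i)"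

text \<open>The positive square root (normalised to be 0 outside ell2, so that it is unique).\<close>

definition op_sqrt :: "(('i \<Rightarrow> complex) \<Rightarrow> ('i \<Rightarrow> complex)) \<Rightarrow> (('i \<Rightarrow> complex) \<Rightarrow> ('i \<Rightarrow> complex))" where
  "op_sqrt A = (THE S. positive_op S \<and> (\<forall>f. f \<notin> ell2 \<longrightarrow> S f = (\<lambda>_. 0)) \<and>
                       (\<forall>f\<in>ell2. S (S f) = A f))"

section \<open>Operator matrices on \<open>H \<oplus> H\<close> (index type \<open>'i + 'i\<close>)\<close>

definition opmat ::
  "(('i \<Rightarrow> complex) \<Rightarrow> ('i \<Rightarrow> complex)) \<Rightarrow> (('i \<Rightarrow> complex) \<Rightarrow> ('i \<Rightarrow> complex)) \<Rightarrow>
   (('i \<Rightarrow> complex) \<Rightarrow> ('i \<Rightarrow> complex)) \<Rightarrow> (('i \<Rightarrow> complex) \<Rightarrow> ('i \<Rightarrow> complex)) \<Rightarrow>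
   (('i + 'i \<Rightarrow> complex) \<Rightarrow> ('i + 'i \<Rightarrow> complex))" where
  "opmat A B C D = (\<lambda>v. case_sum (\<lambda>i. A (v \<circ> Inl) i + B (v \<circ> Inr) i)
                                  (\<lambda>i. C (v \<circ> Inl) i + D (v \<circ> Inr) i))"

definition semi_hyponormal ::
  "(('i \<Rightarrow> complex) \<Rightarrow> ('i \<Rightarrow> complex)) \<Rightarrow> (('i \<Rightarrow> complex) \<Rightarrow> ('i \<Rightarrow> complex)) \<Rightarrow> bool" where
  "semi_hyponormal T1 T2 \<longleftrightarrow>
     (let L = opmat (adj T1 \<circ> T1) (adj T2 \<circ> T1) (adj T1 \<circ> T2) (adj T2 \<circ> T2);
          R = opmat (T1 \<circ> adj T1) (T1 \<circ> adj T2) (T2 \<circ> adj T1) (T2 \<circ> adj T2)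
      in positive_op L \<and> op_le (op_sqrt R) (op_sqrt L))"

definition shift1 :: "(nat \<times> nat \<Rightarrow> real) \<Rightarrow> (nat \<times> nat \<Rightarrow> complex) \<Rightarrow> (nat \<times> nat \<Rightarrow> complex)" where
  "shift1 w f = (\<lambda>(k1, k2). if k1 = 0 then 0 else complex_of_real (w (k1 - 1, k2)) * f (k1 - 1, k2))"

definition shift2 :: "(nat \<times> nat \<Rightarrow> real) \<Rightarrow> (nat \<times> nat \<Rightarrow> complex) \<Rightarrow> (nat \<times> nat \<Rightarrow> complex)" where
  "shift2 w f = (\<lambda>(k1, k2). if k2 = 0 then 0 else complex_of_real (w (k1, k2 - 1)) * f (k1, k2 - 1))"

text \<open>\<open>T1 e_k = \<alpha>_k e_{k+(1,0)}\<close>, \<open>T2 e_k = \<beta>_k e_{k+(0,1)}\<close>.\<close>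

definition alphaW :: "real \<Rightarrow> real \<Rightarrow> real \<Rightarrow> nat \<times> nat \<Rightarrow> real" where
  "alphaW a x y = (\<lambda>(k1, k2). if k1 = 0 \<and> k2 = 0 then x else if k1 = 0 then a else 1)"

definition betaW :: "real \<Rightarrow> real \<Rightarrow> real \<Rightarrow> nat \<times> nat \<Rightarrow> real" where
  "betaW a x y = (\<lambda>(k1, k2). if k1 = 0 \<and> k2 = 0 then y else if k2 = 0 then a * y / x else 1)"

definition W1 :: "real \<Rightarrow> real \<Rightarrow> real \<Rightarrow> (nat \<times> nat \<Rightarrow> complex) \<Rightarrow> (nat \<times> nat \<Rightarrow> complex)" where
  "W1 a x y = shift1 (alphaW a x y)"

definition W2 :: "real \<Rightarrow> real \<Rightarrow> real \<Rightarrow> (nat \<times> nat \<Rightarrow> complex) \<Rightarrow> (nat \<times> nat \<Rightarrow> complex)" where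
  "W2 a x y = shift2 (betaW a x y)"

end

theory Submission
  imports Defs
begin


lemma ell2_iff: "f \<in> ell2 \<longleftrightarrow> (\<lambda>i. (cmod (f i))\<^sup>2) summable_on UNIV"
  by (simp add: ell2_def)

lemma ell2_add:
  assumes "f \<in> ell2" "g \<in> ell2" shows "(\<lambda>i. f i + g i) \<in> ell2"
proof -
  have s: "(\<lambda>i. 2 * (cmod (f i))\<^sup>2 + 2 * (cmod (g i))\<^sup>2) summable_on UNIV"
    using assms by (intro summable_on_add summable_on_cmult_right) (auto simp: ell2_def)
  have "(cmod (f i + g i))\<^sup>2 \<le> 2 * (cmod (f i))\<^sup>2 + 2 * (cmod (g i))\<^sup>2" for i
  proof -
    have "cmod (f i + g i) \<le> cmod (f i) + cmod (g i)" by (rule norm_triangle_ineq)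
    hence "(cmod (f i + g i))\<^sup>2 \<le> (cmod (f i) + cmod (g i))\<^sup>2"
      by (simp add: power_mono)
    also have "\<dots> \<le> 2 * (cmod (f i))\<^sup>2 + 2 * (cmod (g i))\<^sup>2"
      using sum_squares_bound[of "cmod (f i)" "cmod (g i)"] by (simp add: power2_sum)
    finally show ?thesis .
  qed
  then show ?thesis unfolding ell2_def
    by (auto intro!: summable_on_comparison_test[OF s])
qed

lemma ell2_scale:
  assumes "f \<in> ell2" shows "(\<lambda>i. c * f i) \<in> ell2"
proof -
  have "(\<lambda>i. (cmod c)\<^sup>2 * (cmod (f i))\<^sup>2) summable_on UNIV"
    using assms by (intro summable_on_cmult_right) (auto simp: ell2_def)
  then show ?thesis by (simp add: ell2_def norm_mult power_mult_distrib)
qed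

lemma ell2_zero: "(\<lambda>_. 0) \<in> ell2"
  by (simp add: ell2_def)

lemma ell2_finite:
  assumes "finite {i. f i \<noteq> 0}" shows "f \<in> ell2"
proof -
  have "(\<lambda>i. (cmod (f i))\<^sup>2) summable_on {i. f i \<noteq> 0}" using assms by simp
  then show ?thesis unfolding ell2_def
    using summable_on_cong_neutral[where T="{i. f i \<noteq> 0}" and S=UNIV and f="\<lambda>i. (cmod (f i))\<^sup>2" and g="\<lambda>i. (cmod (f i))\<^sup>2"] by auto
qed

lemma ell2_diff:
  assumes "f \<in> ell2" "g \<in> ell2" shows "(\<lambda>i. f i - g i) \<in> ell2"
  using ell2_add[OF assms(1) ell2_scale[OF assms(2), of "-1"]] by simp

lemma ip_summable:
  assumes "f \<in> ell2" "g \<in> ell2"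
  shows "(\<lambda>i. f i * cnj (g i)) summable_on UNIV"
proof (rule abs_summable_summable)
  have s: "(\<lambda>i. (cmod (f i))\<^sup>2 + (cmod (g i))\<^sup>2) summable_on UNIV"
    using assms by (intro summable_on_add) (auto simp: ell2_def)
  have "norm (f i * cnj (g i)) \<le> (cmod (f i))\<^sup>2 + (cmod (g i))\<^sup>2" for i
  proof -
    have "norm (f i * cnj (g i)) = cmod (f i) * cmod (g i)" by (simp add: norm_mult)
    also have "\<dots> \<le> (cmod (f i))\<^sup>2 + (cmod (g i))\<^sup>2"
      using sum_squares_bound[of "cmod (f i)" "cmod (g i)"]
        mult_nonneg_nonneg[OF norm_ge_zero norm_ge_zero, of "f i" "g i"] unfolding mult.assoc by linarith
    finally show ?thesis .
  qed
  then show "(\<lambda>i. norm (f i * cnj (g i))) summable_on UNIV"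
    by (auto intro!: summable_on_comparison_test[OF s])
qed

lemma ip_add_left:
  assumes "f \<in> ell2" "g \<in> ell2" "h \<in> ell2"
  shows "ip (\<lambda>i. f i + g i) h = ip f h + ip g h"
  unfolding ip_def using ip_summable[OF assms(1,3)] ip_summable[OF assms(2,3)]
  by (simp add: distrib_right infsum_add)

lemma ip_scale_left:
  assumes "f \<in> ell2" "h \<in> ell2"
  shows "ip (\<lambda>i. c * f i) h = c * ip f h"
  unfolding ip_def using ip_summable[OF assms]
  by (simp add: mult.assoc infsum_cmult_right)

lemma ip_cnj: "ip g f = cnj (ip f g)"
  unfolding ip_def by (simp flip: infsum_cnj add: mult.commute)

lemma ip_add_right:
  assumes "f \<in> ell2" "g \<in> ell2" "h \<in> ell2"
  shows "ip h (\<lambda>i. f i + g i) = ip h f + ip h g"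
  using ip_add_left[OF assms] by (metis ip_cnj complex_cnj_add)

lemma ip_scale_right:
  assumes "f \<in> ell2" "h \<in> ell2"
  shows "ip h (\<lambda>i. c * f i) = cnj c * ip h f"
  using ip_scale_left[OF assms, of c] by (metis ip_cnj complex_cnj_mult)

lemma ip_self:
  assumes "f \<in> ell2" shows "ip f f = complex_of_real (nsq f)"
proof -
  have "(\<lambda>i. (cmod (f i))\<^sup>2) summable_on UNIV" using assms by (simp add: ell2_def)
  then have "((\<lambda>i. complex_of_real ((cmod (f i))\<^sup>2)) has_sum complex_of_real (nsq f)) UNIV"
    unfolding nsq_def by (intro has_sum_of_real) (simp add: has_sum_infsum)
  moreover have "(\<lambda>i. f i * cnj (f i)) = (\<lambda>i. complex_of_real ((cmod (f i))\<^sup>2))"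
    by (simp only: complex_norm_square)
  ultimately show ?thesis unfolding ip_def by (simp add: infsumI)
qed

lemma nsq_nonneg: "nsq f \<ge> 0"
  unfolding nsq_def by (rule infsum_nonneg) simp

lemma nsq_ge_point:
  assumes "f \<in> ell2" shows "(cmod (f j))\<^sup>2 \<le> nsq f"
proof -
  have "infsum (\<lambda>i. (cmod (f i))\<^sup>2) {j} \<le> infsum (\<lambda>i. (cmod (f i))\<^sup>2) UNIV"
    using assms by (intro infsum_mono_neutral) (auto simp: ell2_def)
  then show ?thesis by (simp add: nsq_def)
qed

lemma nsq_eq_0:
  assumes "f \<in> ell2" "nsq f \<le> 0" shows "f = (\<lambda>_. 0)"
proof
  fix j
  have "(cmod (f j))\<^sup>2 \<le> 0" using nsq_ge_point[OF assms(1), of j] assms(2) by linarith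
  then show "f j = 0" by simp
qed

definition uvec :: "'i \<Rightarrow> 'i \<Rightarrow> complex" where
  "uvec j = (\<lambda>k. if k = j then 1 else 0)"

lemma uvec_ell2: "uvec j \<in> ell2"
  by (rule ell2_finite) (simp add: uvec_def)

lemma ip_uvec: "ip f (uvec j) = f j"
proof -
  have "ip f (uvec j) = infsum (\<lambda>i. f i * cnj (uvec j i)) {j}"
    unfolding ip_def by (rule infsum_cong_neutral) (auto simp: uvec_def)
  then show ?thesis by (simp add: uvec_def)
qed

lemma ip_finite_support:
  assumes "finite F" "\<And>i. i \<notin> F \<Longrightarrow> g i = 0"
  shows "ip f g = (\<Sum>i\<in>F. f i * cnj (g i))"
proof -
  have "ip f g = infsum (\<lambda>i. f i * cnj (g i)) F"
    unfolding ip_def by (rule infsum_cong_neutral) (auto simp: assms)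
  then show ?thesis using assms by simp
qed

lemma bop_ell2: "bounded_op A \<Longrightarrow> f \<in> ell2 \<Longrightarrow> A f \<in> ell2"
  by (simp add: bounded_op_def)
lemma bop_add: "bounded_op A \<Longrightarrow> f \<in> ell2 \<Longrightarrow> g \<in> ell2 \<Longrightarrow> A (\<lambda>i. f i + g i) = (\<lambda>i. A f i + A g i)"
  by (simp add: bounded_op_def)
lemma bop_scale: "bounded_op A \<Longrightarrow> f \<in> ell2 \<Longrightarrow> A (\<lambda>i. c * f i) = (\<lambda>i. c * A f i)"
  by (simp add: bounded_op_def)

lemma bop_lin2:
  assumes "bounded_op A" "f \<in> ell2" "g \<in> ell2"
  shows "A (\<lambda>i. c * f i + d * g i) = (\<lambda>i. c * A f i + d * A g i)"
proof -
  have "A (\<lambda>i. c * f i + d * g i) = (\<lambda>i. A (\<lambda>i. c * f i) i + A (\<lambda>i. d * g i) i)"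
    by (rule bop_add[OF assms(1) ell2_scale[OF assms(2)] ell2_scale[OF assms(3)]])
  then show ?thesis using assms by (simp add: bop_scale)
qed

lemma bop_zero: "bounded_op A \<Longrightarrow> A (\<lambda>_. 0) = (\<lambda>_. 0)"
  using bop_scale[of A "\<lambda>_. 0" 0] ell2_zero by simp

lemma pos_selfadj:
  assumes "positive_op S" "f \<in> ell2" "g \<in> ell2"
  shows "ip (S f) g = ip f (S g)"
proof -
  have bS: "bounded_op S" using assms(1) by (simp add: positive_op_def)
  have real: "Im (ip (S h) h) = 0" if "h \<in> ell2" for h
    using assms(1) that by (simp add: positive_op_def)
  define B where "B = (\<lambda>u v. ip (S u) v)"
  have Sf: "S f \<in> ell2" and Sg: "S g \<in> ell2" using bS assms by (auto simp: bop_ell2)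
  have exp: "B (\<lambda>i. f i + c * g i) (\<lambda>i. f i + c * g i) = B f f + cnj c * B f g + c * B g f + c * cnj c * B g g" for c
  proof -
    have gc: "(\<lambda>i. c * g i) \<in> ell2" using assms by (simp add: ell2_scale)
    have "S (\<lambda>i. f i + c * g i) = (\<lambda>i. S f i + S (\<lambda>i. c * g i) i)"
      using bop_add[OF bS assms(2) gc] .
    also have "\<dots> = (\<lambda>i. S f i + c * S g i)" using bS assms by (simp add: bop_scale)
    finally have "S (\<lambda>i. f i + c * g i) = (\<lambda>i. S f i + c * S g i)" .
    then have "B (\<lambda>i. f i + c * g i) (\<lambda>i. f i + c * g i) = ip (\<lambda>i. S f i + c * S g i) (\<lambda>i. f i + c * g i)"
      by (simp add: B_def)
    also have "\<dots> = ip (S f) (\<lambda>i. f i + c * g i) + c * ip (S g) (\<lambda>i. f i + c * g i)"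
      using Sf Sg assms gc by (simp add: ip_add_left ip_scale_left ell2_scale ell2_add)
    also have "\<dots> = B f f + cnj c * B f g + c * B g f + c * cnj c * B g g"
      using Sf Sg assms gc by (simp add: ip_add_right ip_scale_right B_def algebra_simps)
    finally show ?thesis .
  qed
  have r1: "Im (B (\<lambda>i. f i + c * g i) (\<lambda>i. f i + c * g i)) = 0" for c
    unfolding B_def using assms by (intro real ell2_add ell2_scale) auto
  have rf: "Im (B f f) = 0" and rg: "Im (B g g) = 0" using real assms by (auto simp: B_def)
  have e1: "Im (B f g + B g f) = 0" using r1[of 1] exp[of 1] rf rg by simp
  have e2: "Im (- \<i> * B f g + \<i> * B g f) = 0" using r1[of "\<i>"] exp[of "\<i>"] rf rg by simp
  have "B g f = cnj (B f g)"
    using e1 e2 by (simp add: complex_eq_iff)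
  then show ?thesis
    by (metis B_def ip_cnj complex_cnj_cnj)
qed



definition invol :: "('i \<Rightarrow> 'i) \<Rightarrow> bool" where
  "invol p \<longleftrightarrow> (\<forall>j. p (p j) = j)"

definition Mop :: "('i \<Rightarrow> 'i) \<Rightarrow> ('i \<Rightarrow> real) \<Rightarrow> ('i \<Rightarrow> real) \<Rightarrow> ('i \<Rightarrow> complex) \<Rightarrow> ('i \<Rightarrow> complex)" where
  "Mop p d c f = (\<lambda>j. complex_of_real (d j) * f j + complex_of_real (c j) * f (p j))"

definition cfok :: "('i \<Rightarrow> 'i) \<Rightarrow> ('i \<Rightarrow> real) \<Rightarrow> bool" where
  "cfok p c \<longleftrightarrow> (\<forall>j. c (p j) = c j) \<and> (\<forall>j. p j = j \<longrightarrow> c j = 0)"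

definition bnd :: "('i \<Rightarrow> real) \<Rightarrow> bool" where
  "bnd d \<longleftrightarrow> (\<exists>K. \<forall>j. \<bar>d j\<bar> \<le> K)"

definition psd2 :: "real \<Rightarrow> real \<Rightarrow> real \<Rightarrow> bool" where
  "psd2 a b c \<longleftrightarrow> 0 \<le> a \<and> 0 \<le> c \<and> b\<^sup>2 \<le> a * c"

definition blocks_psd :: "('i \<Rightarrow> 'i) \<Rightarrow> ('i \<Rightarrow> real) \<Rightarrow> ('i \<Rightarrow> real) \<Rightarrow> bool" where
  "blocks_psd p d c \<longleftrightarrow> (\<forall>j. (p j = j \<longrightarrow> 0 \<le> d j) \<and> (p j \<noteq> j \<longrightarrow> psd2 (d j) (c j) (d (p j))))"

lemma invol_bij: "invol p \<Longrightarrow> bij p"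
  unfolding invol_def by (intro o_bij[of p p]) (auto simp: fun_eq_iff)

lemma invol_inj: "invol p \<Longrightarrow> inj p"
  using invol_bij bij_is_inj by blast

lemma invol_range: "invol p \<Longrightarrow> p ` UNIV = UNIV"
  using invol_bij bij_is_surj by blast

lemma comp_ell2:
  assumes "invol p" "f \<in> ell2" shows "(\<lambda>j. f (p j)) \<in> ell2"
proof -
  have "(\<lambda>i. (cmod (f i))\<^sup>2) summable_on p ` UNIV" using assms by (simp add: ell2_def invol_range)
  then have "((\<lambda>i. (cmod (f i))\<^sup>2) \<circ> p) summable_on UNIV"
    using summable_on_reindex[OF invol_inj[OF assms(1)], of "\<lambda>i. (cmod (f i))\<^sup>2"] by blast
  then show ?thesis by (simp add: ell2_def o_def)
qed

lemma comp_nsq: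
  assumes "invol p" shows "nsq (\<lambda>j. f (p j)) = nsq f"
proof -
  have "infsum (\<lambda>i. (cmod (f i))\<^sup>2) (p ` UNIV) = infsum ((\<lambda>i. (cmod (f i))\<^sup>2) \<circ> p) UNIV"
    using infsum_reindex[of p UNIV] invol_inj[OF assms(1)] by simp
  then show ?thesis using assms by (simp add: nsq_def invol_range o_def)
qed

lemma bndE:
  assumes "bnd d" obtains K where "0 \<le> K" "\<And>j. \<bar>d j\<bar> \<le> K"
proof -
  obtain K where K: "\<And>j. \<bar>d j\<bar> \<le> K" using assms by (auto simp: bnd_def)
  have "0 \<le> K" using K[of undefined] by linarith
  then show ?thesis using K that by blast
qed

lemma ell2_le:
  assumes "h \<in> ell2" "\<And>i. cmod (g i) \<le> cmod (h i)"
  shows "g \<in> ell2" "nsq g \<le> nsq h"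
proof -
  have le: "(cmod (g i))\<^sup>2 \<le> (cmod (h i))\<^sup>2" for i
    by (intro power_mono assms(2)) simp
  have "(\<lambda>i. (cmod (g i))\<^sup>2) summable_on UNIV"
    using assms(1) le by (rule_tac summable_on_comparison_test[where f="\<lambda>i. (cmod (h i))\<^sup>2"]) (auto simp: ell2_def)
  then show g: "g \<in> ell2" by (simp add: ell2_def)
  show "nsq g \<le> nsq h" unfolding nsq_def
    using g assms(1) le by (rule_tac infsum_mono) (auto simp: ell2_def)
qed

lemma nsq_scale: "nsq (\<lambda>i. c * f i) = (cmod c)\<^sup>2 * nsq f"
proof -
  have "(\<lambda>i. (cmod (c * f i))\<^sup>2) = (\<lambda>i. (cmod c)\<^sup>2 * (cmod (f i))\<^sup>2)"
    by (simp add: norm_mult power_mult_distrib)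
  then show ?thesis unfolding nsq_def by (simp only: infsum_cmult_right')
qed

lemma nsq_add_le:
  assumes "f \<in> ell2" "g \<in> ell2"
  shows "nsq (\<lambda>i. f i + g i) \<le> 2 * nsq f + 2 * nsq g"
proof -
  have le: "(cmod (f i + g i))\<^sup>2 \<le> 2 * (cmod (f i))\<^sup>2 + 2 * (cmod (g i))\<^sup>2" for i
  proof -
    have "cmod (f i + g i) \<le> cmod (f i) + cmod (g i)" by (rule norm_triangle_ineq)
    hence "(cmod (f i + g i))\<^sup>2 \<le> (cmod (f i) + cmod (g i))\<^sup>2"
      by (simp add: power_mono)
    also have "\<dots> \<le> 2 * (cmod (f i))\<^sup>2 + 2 * (cmod (g i))\<^sup>2"
      using sum_squares_bound[of "cmod (f i)" "cmod (g i)"] by (simp add: power2_sum)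
    finally show ?thesis .
  qed
  have sf: "(\<lambda>i. (cmod (f i))\<^sup>2) summable_on UNIV" and sg: "(\<lambda>i. (cmod (g i))\<^sup>2) summable_on UNIV"
    using assms by (auto simp: ell2_def)
  have "nsq (\<lambda>i. f i + g i) \<le> infsum (\<lambda>i. 2 * (cmod (f i))\<^sup>2 + 2 * (cmod (g i))\<^sup>2) UNIV"
    unfolding nsq_def using ell2_add[OF assms] le sf sg
    by (intro infsum_mono summable_on_add summable_on_cmult_right) (auto simp: ell2_def)
  also have "\<dots> = 2 * nsq f + 2 * nsq g"
    unfolding nsq_def using sf sg
    by (simp add: infsum_add summable_on_cmult_right infsum_cmult_right)
  finally show ?thesis .
qed

lemma ell2_abs: assumes "f \<in> ell2" shows "(\<lambda>i. complex_of_real (cmod (f i))) \<in> ell2"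
  "nsq (\<lambda>i. complex_of_real (cmod (f i))) = nsq f"
  using assms by (auto simp: ell2_def nsq_def)

lemma Mop_ell2_bound:
  assumes "invol p" "bnd d" "bnd c"
  obtains C where "\<And>f. f \<in> ell2 \<Longrightarrow> Mop p d c f \<in> ell2 \<and> nsq (Mop p d c f) \<le> C * nsq f"
proof -
  obtain K1 where K1: "0 \<le> K1" "\<And>j. \<bar>d j\<bar> \<le> K1" using bndE[OF assms(2)] by blast
  obtain K2 where K2: "0 \<le> K2" "\<And>j. \<bar>c j\<bar> \<le> K2" using bndE[OF assms(3)] by blast
  define K where "K = K1 + K2"
  have K: "0 \<le> K" "\<And>j. \<bar>d j\<bar> \<le> K" "\<And>j. \<bar>c j\<bar> \<le> K"
  proof -
    show "0 \<le> K" using K1 K2 unfolding K_def by simp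
    show "\<bar>d j\<bar> \<le> K" for j using K1(2)[of j] K2(1) unfolding K_def by linarith
    show "\<bar>c j\<bar> \<le> K" for j using K2(2)[of j] K1(1) unfolding K_def by linarith
  qed
  have *: "Mop p d c f \<in> ell2 \<and> nsq (Mop p d c f) \<le> (4 * K\<^sup>2) * nsq f" if f: "f \<in> ell2" for f
  proof -
    define a where "a = (\<lambda>i. complex_of_real K * complex_of_real (cmod (f i)))"
    define b where "b = (\<lambda>i. complex_of_real K * complex_of_real (cmod (f (p i))))"
    have a: "a \<in> ell2" "nsq a = K\<^sup>2 * nsq f"
      unfolding a_def using f ell2_abs[OF f] by (auto simp: ell2_scale nsq_scale)
    have fp: "(\<lambda>i. f (p i)) \<in> ell2" using comp_ell2[OF assms(1) f] .
    have b: "b \<in> ell2" "nsq b = K\<^sup>2 * nsq f"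
      unfolding b_def using fp ell2_abs[OF fp] comp_nsq[OF assms(1), of f]
      by (auto simp: ell2_scale nsq_scale)
    have ab: "(\<lambda>i. a i + b i) \<in> ell2" using a b by (simp add: ell2_add)
    have le: "cmod (Mop p d c f i) \<le> cmod (a i + b i)" for i
    proof -
      have "cmod (Mop p d c f i) \<le> \<bar>d i\<bar> * cmod (f i) + \<bar>c i\<bar> * cmod (f (p i))"
        unfolding Mop_def by (rule order_trans[OF norm_triangle_ineq]) (simp add: norm_mult)
      also have "\<dots> \<le> K * cmod (f i) + K * cmod (f (p i))"
        using K by (intro add_mono mult_right_mono) auto
      also have "\<dots> = cmod (a i + b i)"
      proof -
        have "a i + b i = complex_of_real (K * cmod (f i) + K * cmod (f (p i)))"
          by (simp add: a_def b_def)
        moreover have "K * cmod (f i) + K * cmod (f (p i)) \<ge> 0" using K(1) by simp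
        ultimately show ?thesis by (simp only: norm_of_real abs_of_nonneg)
      qed
      finally show ?thesis .
    qed
    have "Mop p d c f \<in> ell2" using ell2_le(1)[OF ab le] .
    moreover have "nsq (Mop p d c f) \<le> nsq (\<lambda>i. a i + b i)" using ell2_le(2)[OF ab le] .
    moreover have "nsq (\<lambda>i. a i + b i) \<le> 2 * nsq a + 2 * nsq b" using nsq_add_le a b by blast
    ultimately show ?thesis using a b by (simp add: algebra_simps)
  qed
  show ?thesis using * that by blast
qed

lemma Mop_bounded:
  assumes "invol p" "bnd d" "bnd c"
  shows "bounded_op (Mop p d c)"
proof -
  obtain C where C: "\<And>f. f \<in> ell2 \<Longrightarrow> Mop p d c f \<in> ell2 \<and> nsq (Mop p d c f) \<le> C * nsq f"
    using Mop_ell2_bound[OF assms] by blast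
  show ?thesis unfolding bounded_op_def
    using C by (auto simp: Mop_def algebra_simps)
qed

lemma Mop_comp:
  assumes "invol p"
  shows "Mop p d1 c1 (Mop p d2 c2 f) =
    Mop p (\<lambda>j. d1 j * d2 j + c1 j * c2 (p j)) (\<lambda>j. d1 j * c2 j + c1 j * d2 (p j)) f"
  using assms by (auto simp: Mop_def invol_def algebra_simps)

lemma psd2_quad:
  fixes u v :: real
  assumes "psd2 a b c" shows "0 \<le> a * u\<^sup>2 + 2 * b * u * v + c * v\<^sup>2"
proof (cases "a = 0")
  case True
  then have "b = 0" using assms by (simp add: psd2_def)
  then show ?thesis using True assms by (simp add: psd2_def)
next
  case False
  then have a: "a > 0" using assms by (simp add: psd2_def)
  have "a * (a * u\<^sup>2 + 2 * b * u * v + c * v\<^sup>2) = (a * u + b * v)\<^sup>2 + (a * c - b\<^sup>2) * v\<^sup>2"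
    by (simp add: power2_eq_square algebra_simps)
  also have "\<dots> \<ge> 0" using assms by (simp add: psd2_def)
  finally show ?thesis using a by (simp add: zero_le_mult_iff)
qed

lemma psd2_quad_conv:
  assumes "\<And>u v. 0 \<le> a * u\<^sup>2 + 2 * b * u * v + c * (v::real)\<^sup>2"
  shows "psd2 a b c"
proof -
  have a: "0 \<le> a" using assms[of 1 0] by simp
  have c: "0 \<le> c" using assms[of 0 1] by simp
  have "b\<^sup>2 \<le> a * c"
  proof (cases "a = 0")
    case True
    show ?thesis
    proof (rule ccontr)
      assume "\<not> ?thesis"
      then have "b \<noteq> 0" using True by simp
      then have "2 * b * (- (c + 1) / (2 * b)) = - (c + 1)" by simp
      then show False using assms[of "- (c + 1) / (2 * b)" 1] True by simp
    qed
  next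
    case False
    then have "a > 0" using a by simp
    have "0 \<le> a * (-b)\<^sup>2 + 2 * b * (-b) * a + c * a\<^sup>2" using assms by blast
    also have "\<dots> = a * (a * c - b\<^sup>2)" by (simp add: power2_eq_square algebra_simps)
    finally show ?thesis using \<open>a > 0\<close> by (simp add: zero_le_mult_iff)
  qed
  then show ?thesis using a c by (simp add: psd2_def)
qed

lemma psd2_cquad:
  assumes "psd2 a b c"
  shows "0 \<le> (complex_of_real a * z1 + complex_of_real b * z2) * cnj z1 + (complex_of_real c * z2 + complex_of_real b * z1) * cnj z2"
proof -
  have re: "Re ((complex_of_real a * z1 + complex_of_real b * z2) * cnj z1 + (complex_of_real c * z2 + complex_of_real b * z1) * cnj z2)
    = (a * (Re z1)\<^sup>2 + 2 * b * Re z1 * Re z2 + c * (Re z2)\<^sup>2) + (a * (Im z1)\<^sup>2 + 2 * b * Im z1 * Im z2 + c * (Im z2)\<^sup>2)"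
    by (simp add: power2_eq_square algebra_simps)
  have im: "Im ((complex_of_real a * z1 + complex_of_real b * z2) * cnj z1 + (complex_of_real c * z2 + complex_of_real b * z1) * cnj z2) = 0"
    by (simp add: algebra_simps)
  have "0 \<le> (a * (Re z1)\<^sup>2 + 2 * b * Re z1 * Re z2 + c * (Re z2)\<^sup>2) + (a * (Im z1)\<^sup>2 + 2 * b * Im z1 * Im z2 + c * (Im z2)\<^sup>2)"
    using psd2_quad[OF assms] by (simp add: add_nonneg_nonneg)
  then show ?thesis using re im by (simp add: less_eq_complex_def)
qed

lemma Mop_ell2:
  assumes "invol p" "bnd d" "bnd c" "f \<in> ell2" shows "Mop p d c f \<in> ell2"
  using Mop_ell2_bound[OF assms(1-3)] assms(4) by metis

lemma Mop_pos_if: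
  assumes "invol p" "bnd d" "bnd c" "cfok p c" "blocks_psd p d c" "f \<in> ell2"
  shows "0 \<le> ip (Mop p d c f) f"
proof -
  define q where "q = (\<lambda>j. Mop p d c f j * cnj (f j))"
  have pp: "\<And>j. p (p j) = j" using assms(1) by (simp add: invol_def)
  have cp: "\<And>j. c (p j) = c j" using assms(4) by (simp add: cfok_def)
  have M: "Mop p d c f \<in> ell2" using Mop_ell2[OF assms(1-3,6)] .
  have sq: "q summable_on UNIV" unfolding q_def using ip_summable[OF M assms(6)] .
  have sqp: "(q \<circ> p) summable_on UNIV"
    using sq summable_on_reindex[of p UNIV q] invol_inj[OF assms(1)] invol_range[OF assms(1)] by simp
  have eqp: "infsum (q \<circ> p) UNIV = infsum q UNIV"
    using infsum_reindex[of p UNIV q] invol_inj[OF assms(1)] invol_range[OF assms(1)] by simp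
  have pw: "0 \<le> q j + q (p j)" for j
  proof (cases "p j = j")
    case True
    then have "c j = 0" using assms(4) by (simp add: cfok_def)
    moreover have "0 \<le> d j" using True assms(5) by (simp add: blocks_psd_def)
    ultimately have "q j = complex_of_real (d j) * (f j * cnj (f j))"
      unfolding q_def Mop_def using True by (simp add: algebra_simps)
    moreover have "Re (complex_of_real (d j) * (f j * cnj (f j))) = d j * ((Re (f j))\<^sup>2 + (Im (f j))\<^sup>2)"
      by (simp add: power2_eq_square algebra_simps)
    moreover have "Im (complex_of_real (d j) * (f j * cnj (f j))) = 0"
      by (simp add: algebra_simps)
    ultimately show ?thesis using True \<open>0 \<le> d j\<close> by (simp add: less_eq_complex_def)
  next
    case False
    then have ps: "psd2 (d j) (c j) (d (p j))" using assms(5) by (simp add: blocks_psd_def)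
    have "q j + q (p j) = (complex_of_real (d j) * f j + complex_of_real (c j) * f (p j)) * cnj (f j)
        + (complex_of_real (d (p j)) * f (p j) + complex_of_real (c j) * f j) * cnj (f (p j))"
      unfolding q_def Mop_def by (simp add: cp pp)
    then show ?thesis using psd2_cquad[OF ps] by simp
  qed
  have "0 \<le> infsum (\<lambda>j. q j + q (p j)) UNIV"
    using sq sqp pw by (intro infsum_nonneg_complex summable_on_add) (auto simp: o_def)
  also have "\<dots> = infsum q UNIV + infsum (q \<circ> p) UNIV"
    using sq sqp by (simp add: infsum_add o_def)
  also have "\<dots> = 2 * ip (Mop p d c f) f" using eqp by (simp add: ip_def q_def)
  finally show ?thesis by (simp add: less_eq_complex_def)
qed

lemma Mop_uvec2:
  assumes "invol p"
  shows "Mop p d c (\<lambda>i. u * uvec j i + v * uvec (p j) i)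
     = (\<lambda>i. (complex_of_real (d j) * u + complex_of_real (c j) * v) * uvec j i
          + (complex_of_real (d (p j)) * v + complex_of_real (c (p j)) * u) * uvec (p j) i)"
proof
  fix i
  have pp: "\<And>j. p (p j) = j" using assms(1) by (simp add: invol_def)
  have pe: "p i = j \<longleftrightarrow> i = p j" using pp by metis
  have pe2: "p i = p j \<longleftrightarrow> i = j" using pp by metis
  show "Mop p d c (\<lambda>i. u * uvec j i + v * uvec (p j) i) i = (complex_of_real (d j) * u + complex_of_real (c j) * v) * uvec j i
          + (complex_of_real (d (p j)) * v + complex_of_real (c (p j)) * u) * uvec (p j) i"
    unfolding Mop_def uvec_def using pp pe pe2 by (auto simp: algebra_simps)
qed

lemma Mop_pos_only:
  assumes "invol p" "cfok p c" "positive_op (Mop p d c)"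
  shows "blocks_psd p d c"
  unfolding blocks_psd_def
proof (intro allI conjI impI)
  have pp: "\<And>j. p (p j) = j" using assms(1) by (simp add: invol_def)
  have pos: "\<And>f. f \<in> ell2 \<Longrightarrow> Im (ip (Mop p d c f) f) = 0 \<and> Re (ip (Mop p d c f) f) \<ge> 0"
    using assms(3) by (simp add: positive_op_def)
  fix j
  assume pj: "p j = j"
  have "c j = 0" using assms(2) pj by (simp add: cfok_def)
  have "Mop p d c (uvec j) = (\<lambda>i. complex_of_real (d j) * uvec j i)"
    unfolding Mop_def uvec_def using pj \<open>c j = 0\<close> pp by (auto simp: fun_eq_iff)
  then have "ip (Mop p d c (uvec j)) (uvec j) = complex_of_real (d j)"
    by (subst ip_uvec) (simp add: uvec_def)
  then show "0 \<le> d j" using pos[OF uvec_ell2, of j] by simp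
next
  have pp: "\<And>j. p (p j) = j" using assms(1) by (simp add: invol_def)
  have cp: "\<And>j. c (p j) = c j" using assms(2) by (simp add: cfok_def)
  have pos: "\<And>f. f \<in> ell2 \<Longrightarrow> Im (ip (Mop p d c f) f) = 0 \<and> Re (ip (Mop p d c f) f) \<ge> 0"
    using assms(3) by (simp add: positive_op_def)
  fix j
  assume pj: "p j \<noteq> j"
  show "psd2 (d j) (c j) (d (p j))"
  proof (rule psd2_quad_conv)
    fix u v :: real
    define f where "f = (\<lambda>i. complex_of_real u * uvec j i + complex_of_real v * uvec (p j) i)"
    have f: "f \<in> ell2" unfolding f_def by (intro ell2_add ell2_scale uvec_ell2)
    have "Mop p d c f = (\<lambda>i. (complex_of_real (d j) * u + complex_of_real (c j) * v) * uvec j i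
          + (complex_of_real (d (p j)) * v + complex_of_real (c j) * u) * uvec (p j) i)"
      unfolding f_def using Mop_uvec2[OF assms(1)] cp by simp
    then have "ip (Mop p d c f) f = (\<Sum>i\<in>{j, p j}. (Mop p d c f) i * cnj (f i))"
      by (intro ip_finite_support) (auto simp: f_def uvec_def)
    also have "\<dots> = complex_of_real (d j * u\<^sup>2 + 2 * c j * u * v + d (p j) * v\<^sup>2)"
      using pj \<open>Mop p d c f = _\<close> by (simp add: f_def uvec_def power2_eq_square algebra_simps)
    finally show "0 \<le> d j * u\<^sup>2 + 2 * c j * u * v + d (p j) * v\<^sup>2" using pos[OF f] by simp
  qed
qed

lemma positive_op_cong:
  assumes "\<And>f. f \<in> ell2 \<Longrightarrow> A f = B f"
  shows "positive_op A \<longleftrightarrow> positive_op B"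
proof -
  have e1: "\<And>f g. f \<in> ell2 \<Longrightarrow> g \<in> ell2 \<Longrightarrow> A (\<lambda>i. f i + g i) = B (\<lambda>i. f i + g i)"
    using assms ell2_add by blast
  have e2: "\<And>f c. f \<in> ell2 \<Longrightarrow> A (\<lambda>i. c * f i) = B (\<lambda>i. c * f i)"
    using assms ell2_scale by blast
  have "bounded_op A = bounded_op B" unfolding bounded_op_def
    using assms e1 e2 by auto
  then show ?thesis unfolding positive_op_def using assms by auto
qed

lemma Mop_positive_iff:
  assumes "invol p" "bnd d" "bnd c" "cfok p c"
  shows "positive_op (Mop p d c) \<longleftrightarrow> blocks_psd p d c"
proof
  assume "positive_op (Mop p d c)" then show "blocks_psd p d c" using Mop_pos_only assms by blast
next
  assume b: "blocks_psd p d c"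
  show "positive_op (Mop p d c)" unfolding positive_op_def
    using Mop_bounded[OF assms(1-3)] Mop_pos_if[OF assms b]
    by (auto simp: less_eq_complex_def)
qed



definition sqs :: "('i \<Rightarrow> 'i) \<Rightarrow> ('i \<Rightarrow> real) \<Rightarrow> ('i \<Rightarrow> real) \<Rightarrow> 'i \<Rightarrow> real" where
  "sqs p d c j = sqrt (d j * d (p j) - (c j)\<^sup>2)"
definition sqt :: "('i \<Rightarrow> 'i) \<Rightarrow> ('i \<Rightarrow> real) \<Rightarrow> ('i \<Rightarrow> real) \<Rightarrow> 'i \<Rightarrow> real" where
  "sqt p d c j = sqrt (d j + d (p j) + 2 * sqs p d c j)"
definition sqd :: "('i \<Rightarrow> 'i) \<Rightarrow> ('i \<Rightarrow> real) \<Rightarrow> ('i \<Rightarrow> real) \<Rightarrow> 'i \<Rightarrow> real" where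
  "sqd p d c j = (d j + sqs p d c j) / sqt p d c j"
definition sqc :: "('i \<Rightarrow> 'i) \<Rightarrow> ('i \<Rightarrow> real) \<Rightarrow> ('i \<Rightarrow> real) \<Rightarrow> 'i \<Rightarrow> real" where
  "sqc p d c j = c j / sqt p d c j"

lemma blocks_psd_d:
  assumes "blocks_psd p d c" shows "0 \<le> d j"
  using assms by (cases "p j = j") (auto simp: blocks_psd_def psd2_def)

lemma sq_sym:
  assumes "invol p" "cfok p c"
  shows "sqs p d c (p j) = sqs p d c j" "sqt p d c (p j) = sqt p d c j"
proof -
  have pp: "p (p j) = j" using assms(1) by (simp add: invol_def)
  have cp: "c (p j) = c j" using assms(2) by (simp add: cfok_def)
  show 1: "sqs p d c (p j) = sqs p d c j" unfolding sqs_def using pp cp by (simp add: mult.commute)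
  show "sqt p d c (p j) = sqt p d c j" unfolding sqt_def using pp 1 by (simp add: add.commute)
qed

lemma sqrt_block_alg:
  fixes P1 P2 Q :: real
  assumes ps0: "psd2 P1 Q P2"
  defines "s \<equiv> sqrt (P1 * P2 - Q\<^sup>2)"
  defines "t \<equiv> sqrt (P1 + P2 + 2 * s)"
  shows "((P1 + s) / t) * ((P1 + s) / t) + (Q / t) * (Q / t) = P1"
    "((P1 + s) / t) * (Q / t) + (Q / t) * ((P2 + s) / t) = Q"
    "0 \<le> (P1 + s) / t" "psd2 ((P1 + s) / t) (Q / t) ((P2 + s) / t)"
proof -
  have P: "0 \<le> P1" "0 \<le> P2" "Q\<^sup>2 \<le> P1 * P2" using ps0 unfolding psd2_def by blast+
  have s0: "0 \<le> s" unfolding s_def using P by simp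
  have s2: "s\<^sup>2 = P1 * P2 - Q\<^sup>2" unfolding s_def using P by simp
  have t0: "0 \<le> P1 + P2 + 2 * s" using P s0 by simp
  have t2: "t\<^sup>2 = P1 + P2 + 2 * s" unfolding t_def using t0 by simp
  have tn: "0 \<le> t" unfolding t_def using t0 by simp
  show "0 \<le> (P1 + s) / t" using P s0 tn by simp
  show "((P1 + s) / t) * ((P1 + s) / t) + (Q / t) * (Q / t) = P1"
    "((P1 + s) / t) * (Q / t) + (Q / t) * ((P2 + s) / t) = Q"
    "psd2 ((P1 + s) / t) (Q / t) ((P2 + s) / t)"
  proof -
    consider "t = 0" | "t > 0" using tn by linarith
    then have "((P1 + s) / t) * ((P1 + s) / t) + (Q / t) * (Q / t) = P1 \<and>
      ((P1 + s) / t) * (Q / t) + (Q / t) * ((P2 + s) / t) = Q \<and>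
      psd2 ((P1 + s) / t) (Q / t) ((P2 + s) / t)"
    proof cases
      case 1
      then have "P1 + P2 + 2 * s = 0" using t2 by simp
      then have "P1 = 0" "P2 = 0" "s = 0" using P s0 by linarith+
      moreover then have "Q = 0" using P by simp
      ultimately show ?thesis using 1 by (simp add: psd2_def)
    next
      case 2
      have e1: "(P1 + s) * (P1 + s) + Q * Q = P1 * t\<^sup>2"
        using s2 t2 by (simp add: power2_eq_square algebra_simps)
      have e2: "(P1 + s) * Q + Q * (P2 + s) = Q * t\<^sup>2"
        using t2 by (simp add: algebra_simps)
      have e3: "(P1 + s) * (P2 + s) - Q * Q = s * t\<^sup>2"
        using s2 t2 by (simp add: power2_eq_square algebra_simps)
      have "((P1 + s) / t) * ((P1 + s) / t) + (Q / t) * (Q / t) = ((P1 + s) * (P1 + s) + Q * Q) / t\<^sup>2"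
        using 2 by (simp add: power2_eq_square field_simps)
      also have "\<dots> = P1" using e1 2 by simp
      finally have r1: "((P1 + s) / t) * ((P1 + s) / t) + (Q / t) * (Q / t) = P1" .
      have "((P1 + s) / t) * (Q / t) + (Q / t) * ((P2 + s) / t) = ((P1 + s) * Q + Q * (P2 + s)) / t\<^sup>2"
        using 2 by (simp add: power2_eq_square field_simps)
      also have "\<dots> = Q" using e2 2 by simp
      finally have r2: "((P1 + s) / t) * (Q / t) + (Q / t) * ((P2 + s) / t) = Q" .
      have "((P1 + s) / t) * ((P2 + s) / t) - (Q / t)\<^sup>2 = ((P1 + s) * (P2 + s) - Q * Q) / t\<^sup>2"
        using 2 by (simp add: power2_eq_square field_simps)
      also have "\<dots> = s" using e3 2 by simp
      finally have "(Q / t)\<^sup>2 \<le> ((P1 + s) / t) * ((P2 + s) / t)" using s0 by linarith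
      moreover have "0 \<le> (P1 + s) / t" "0 \<le> (P2 + s) / t" using P s0 tn by simp_all
      ultimately show ?thesis using r1 r2 by (simp add: psd2_def)
    qed
    then show "((P1 + s) / t) * ((P1 + s) / t) + (Q / t) * (Q / t) = P1"
      "((P1 + s) / t) * (Q / t) + (Q / t) * ((P2 + s) / t) = Q"
      "psd2 ((P1 + s) / t) (Q / t) ((P2 + s) / t)" by auto
  qed
qed

lemma sq_fixed:
  assumes "p j = j" "cfok p c" "blocks_psd p d c"
  shows "sqd p d c j * sqd p d c j = d j" "sqc p d c j = 0" "0 \<le> sqd p d c j"
proof -
  have c: "c j = 0" using assms by (simp add: cfok_def)
  have d: "0 \<le> d j" using assms by (simp add: blocks_psd_def)
  have ps: "psd2 (d j) (c j) (d j)" using c d by (simp add: psd2_def)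
  have e: "sqd p d c j = (d j + sqrt (d j * d j - (c j)\<^sup>2)) / sqrt (d j + d j + 2 * sqrt (d j * d j - (c j)\<^sup>2))"
    "sqc p d c j = c j / sqrt (d j + d j + 2 * sqrt (d j * d j - (c j)\<^sup>2))"
    unfolding sqd_def sqc_def sqt_def sqs_def using assms(1) by simp_all
  show "sqd p d c j * sqd p d c j = d j" using sqrt_block_alg(1)[OF ps] e c by simp
  show "sqc p d c j = 0" using c by (simp add: sqc_def)
  show "0 \<le> sqd p d c j" using sqrt_block_alg(3)[OF ps] e by simp
qed

lemma sq_pair:
  assumes "invol p" "cfok p c" "blocks_psd p d c" "p j \<noteq> j"
  shows "sqd p d c j * sqd p d c j + sqc p d c j * sqc p d c (p j) = d j"
    "sqd p d c j * sqc p d c j + sqc p d c j * sqd p d c (p j) = c j"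
    "psd2 (sqd p d c j) (sqc p d c j) (sqd p d c (p j))"
proof -
  have pp: "p (p j) = j" using assms(1) by (simp add: invol_def)
  have cp: "c (p j) = c j" using assms(2) by (simp add: cfok_def)
  have ps: "psd2 (d j) (c j) (d (p j))" using assms(3,4) by (simp add: blocks_psd_def)
  have e: "sqd p d c j = (d j + sqrt (d j * d (p j) - (c j)\<^sup>2)) / sqrt (d j + d (p j) + 2 * sqrt (d j * d (p j) - (c j)\<^sup>2))"
    "sqc p d c j = c j / sqrt (d j + d (p j) + 2 * sqrt (d j * d (p j) - (c j)\<^sup>2))"
    unfolding sqd_def sqc_def sqt_def sqs_def by simp_all
  have e2: "sqd p d c (p j) = (d (p j) + sqrt (d j * d (p j) - (c j)\<^sup>2)) / sqrt (d j + d (p j) + 2 * sqrt (d j * d (p j) - (c j)\<^sup>2))"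
    "sqc p d c (p j) = c j / sqrt (d j + d (p j) + 2 * sqrt (d j * d (p j) - (c j)\<^sup>2))"
    unfolding sqd_def sqc_def sqt_def sqs_def using pp cp by (simp_all add: mult.commute add.commute)
  show "sqd p d c j * sqd p d c j + sqc p d c j * sqc p d c (p j) = d j"
    using sqrt_block_alg(1)[OF ps] e e2 by simp
  show "sqd p d c j * sqc p d c j + sqc p d c j * sqd p d c (p j) = c j"
    using sqrt_block_alg(2)[OF ps] e e2 by simp
  show "psd2 (sqd p d c j) (sqc p d c j) (sqd p d c (p j))"
    using sqrt_block_alg(4)[OF ps] e e2 by simp
qed

lemma sq_cfok:
  assumes "invol p" "cfok p c" shows "cfok p (sqc p d c)"
  using assms sq_sym[OF assms] unfolding cfok_def sqc_def by auto

lemma sq_blocks: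
  assumes "invol p" "cfok p c" "blocks_psd p d c"
  shows "blocks_psd p (sqd p d c) (sqc p d c)"
  unfolding blocks_psd_def using sq_fixed[OF _ assms(2,3)] sq_pair[OF assms] by auto

lemma sq_le_bound: fixes z K :: real assumes "z\<^sup>2 \<le> K" shows "\<bar>z\<bar> \<le> max 1 K"
proof (cases "\<bar>z\<bar> \<le> 1")
  case False
  then have "\<bar>z\<bar> * 1 \<le> \<bar>z\<bar> * \<bar>z\<bar>" by (intro mult_left_mono) auto
  then show ?thesis using assms by (simp add: power2_eq_square abs_mult_self_eq)
qed simp

lemma sq_bnd:
  assumes "invol p" "cfok p c" "blocks_psd p d c" "bnd d"
  shows "bnd (sqd p d c)" "bnd (sqc p d c)"
proof -
  obtain K where K: "\<And>j. \<bar>d j\<bar> \<le> K" using assms(4) by (auto simp: bnd_def)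
  have cfs: "cfok p (sqc p d c)" by (rule sq_cfok[OF assms(1,2)])
  have pp: "\<And>j. p (p j) = j" using assms(1) by (simp add: invol_def)
  have A: "(sqd p d c j)\<^sup>2 \<le> K \<and> (sqc p d c j)\<^sup>2 \<le> K" for j
  proof (cases "p j = j")
    case True
    have "d j \<le> K" "0 \<le> K" using K[of j] by auto
    then show ?thesis using sq_fixed[OF True assms(2,3)] by (simp add: power2_eq_square)
  next
    case False
    have F2: "p (p j) \<noteq> p j" using False pp by metis
    have cc: "sqc p d c (p j) = sqc p d c j" using cfs by (simp add: cfok_def)
    have 1: "sqd p d c j * sqd p d c j + sqc p d c j * sqc p d c j = d j"
      using sq_pair(1)[OF assms(1-3) False] cc by simp
    have 2: "sqd p d c (p j) * sqd p d c (p j) + sqc p d c j * sqc p d c j = d (p j)"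
      using sq_pair(1)[OF assms(1-3) F2] cc pp by simp
    have "0 \<le> sqc p d c j * sqc p d c j" "0 \<le> sqd p d c j * sqd p d c j"
      "0 \<le> sqd p d c (p j) * sqd p d c (p j)" by simp_all
    moreover have "d j \<le> K" "d (p j) \<le> K" using K[of j] K[of "p j"] by auto
    ultimately show ?thesis using 1 2 unfolding power2_eq_square by linarith
  qed
  show "bnd (sqd p d c)" unfolding bnd_def using A sq_le_bound by blast
  show "bnd (sqc p d c)" unfolding bnd_def using A sq_le_bound by blast
qed

lemma sq_comp:
  assumes "invol p" "cfok p c" "blocks_psd p d c"
  shows "Mop p (sqd p d c) (sqc p d c) (Mop p (sqd p d c) (sqc p d c) f) = Mop p d c f"
proof -
  have "(\<lambda>j. sqd p d c j * sqd p d c j + sqc p d c j * sqc p d c (p j)) = d"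
  proof
    fix j show "sqd p d c j * sqd p d c j + sqc p d c j * sqc p d c (p j) = d j"
      by (cases "p j = j") (use sq_fixed[OF _ assms(2,3)] sq_pair[OF assms] in auto)
  qed
  moreover have "(\<lambda>j. sqd p d c j * sqc p d c j + sqc p d c j * sqd p d c (p j)) = c"
  proof
    fix j show "sqd p d c j * sqc p d c j + sqc p d c j * sqd p d c (p j) = c j"
      using sq_pair[OF assms] sq_fixed[OF _ assms(2,3)] assms(2)
      by (cases "p j = j") (auto simp: cfok_def)
  qed
  ultimately show ?thesis by (simp add: Mop_comp[OF assms(1)])
qed



lemma ip_zero_right: "ip f (\<lambda>_. 0) = 0"
  by (subst ip_finite_support[of "{}"]) auto

lemma sqrt_eig:
  assumes pos: "positive_op S" and sq: "\<forall>f\<in>ell2. S (S f) = A f" and v: "v \<in> ell2"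
    and Av: "A v = (\<lambda>i. complex_of_real l * v i)" and l: "0 \<le> l"
  shows "S v = (\<lambda>i. complex_of_real (sqrt l) * v i)"
proof -
  have bS: "bounded_op S" using pos by (simp add: positive_op_def)
  have Sv: "S v \<in> ell2" using bS v by (simp add: bop_ell2)
  define r where "r = sqrt l"
  have r0: "0 \<le> r" unfolding r_def using l by simp
  have rr: "complex_of_real r * complex_of_real r = complex_of_real l"
    unfolding r_def using l by (simp flip: of_real_mult)
  define W where "W = (\<lambda>i. S v i + (- complex_of_real r) * v i)"
  have rv: "(\<lambda>i. (- complex_of_real r) * v i) \<in> ell2" using v by (rule ell2_scale)
  have W: "W \<in> ell2" unfolding W_def using Sv rv by (rule ell2_add)
  have "S W = (\<lambda>i. S (S v) i + S (\<lambda>i. (- complex_of_real r) * v i) i)"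
    unfolding W_def by (rule bop_add[OF bS Sv rv])
  also have "\<dots> = (\<lambda>i. A v i + (- complex_of_real r) * S v i)"
    unfolding bop_scale[OF bS v] using sq v by simp
  also have "\<dots> = (\<lambda>i. (- complex_of_real r) * W i)"
    unfolding W_def Av using rr by (auto simp: fun_eq_iff algebra_simps)
  finally have SW: "S W = (\<lambda>i. (- complex_of_real r) * W i)" .
  have "ip (S W) W = (- complex_of_real r) * complex_of_real (nsq W)"
    unfolding SW ip_scale_left[OF W W] ip_self[OF W] ..
  then have "Re (ip (S W) W) = - r * nsq W" by simp
  moreover have "Re (ip (S W) W) \<ge> 0" using pos W by (simp add: positive_op_def)
  ultimately have neg: "r * nsq W \<le> 0" by simp
  show ?thesis
  proof (cases "l = 0")
    case False
    then have "r > 0" using l r0 unfolding r_def by simp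
    then have "nsq W \<le> 0" using neg by (simp add: mult_le_0_iff)
    then have "W = (\<lambda>_. 0)" using nsq_eq_0[OF W] by simp
    then show ?thesis unfolding W_def r_def by (auto simp: fun_eq_iff)
  next
    case True
    have SS: "S (S v) = (\<lambda>_. 0)" using sq v Av True by simp
    have "ip (S v) (S v) = ip v (S (S v))" using pos_selfadj[OF pos v Sv] .
    also have "\<dots> = 0" unfolding SS by (rule ip_zero_right)
    finally have "nsq (S v) \<le> 0" using ip_self[OF Sv] by simp
    then have "S v = (\<lambda>_. 0)" using nsq_eq_0[OF Sv] by simp
    then show ?thesis using True by simp
  qed
qed

definition spanhyp :: "(('i \<Rightarrow> complex) \<Rightarrow> ('i \<Rightarrow> complex)) \<Rightarrow> bool" where
  "spanhyp A \<longleftrightarrow> (\<forall>j. \<exists>V1 V2 l1 l2 k1 k2. V1 \<in> ell2 \<and> V2 \<in> ell2 \<and> 0 \<le> l1 \<and> 0 \<le> l2 \<and>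
     A V1 = (\<lambda>i. complex_of_real l1 * V1 i) \<and> A V2 = (\<lambda>i. complex_of_real l2 * V2 i) \<and>
     uvec j = (\<lambda>i. k1 * V1 i + k2 * V2 i))"

definition sqpred :: "(('i \<Rightarrow> complex) \<Rightarrow> ('i \<Rightarrow> complex)) \<Rightarrow> (('i \<Rightarrow> complex) \<Rightarrow> ('i \<Rightarrow> complex)) \<Rightarrow> bool" where
  "sqpred A S \<longleftrightarrow> positive_op S \<and> (\<forall>f. f \<notin> ell2 \<longrightarrow> S f = (\<lambda>_. 0)) \<and> (\<forall>f\<in>ell2. S (S f) = A f)"

lemma sqrt_unique:
  assumes "sqpred A S1" "sqpred A S2" "spanhyp A"
  shows "S1 = S2"
proof -
  have p1: "positive_op S1" and p2: "positive_op S2"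
    and q1: "\<forall>f\<in>ell2. S1 (S1 f) = A f" and q2: "\<forall>f\<in>ell2. S2 (S2 f) = A f"
    using assms(1,2) by (auto simp: sqpred_def)
  have b1: "bounded_op S1" and b2: "bounded_op S2" using p1 p2 by (auto simp: positive_op_def)
  have U: "S1 (uvec j) = S2 (uvec j)" for j
  proof -
    obtain V1 V2 l1 l2 k1 k2 where V: "V1 \<in> ell2" "V2 \<in> ell2" "0 \<le> l1" "0 \<le> l2"
      "A V1 = (\<lambda>i. complex_of_real l1 * V1 i)" "A V2 = (\<lambda>i. complex_of_real l2 * V2 i)"
      "uvec j = (\<lambda>i. k1 * V1 i + k2 * V2 i)"
      using assms(3) unfolding spanhyp_def by blast
    have "S1 (uvec j) = (\<lambda>i. k1 * S1 V1 i + k2 * S1 V2 i)" unfolding V(7) by (rule bop_lin2[OF b1 V(1,2)])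
    also have "\<dots> = (\<lambda>i. k1 * (complex_of_real (sqrt l1) * V1 i) + k2 * (complex_of_real (sqrt l2) * V2 i))"
      using sqrt_eig[OF p1 q1 V(1) V(5) V(3)] sqrt_eig[OF p1 q1 V(2) V(6) V(4)] by simp
    also have "\<dots> = (\<lambda>i. k1 * S2 V1 i + k2 * S2 V2 i)"
      using sqrt_eig[OF p2 q2 V(1) V(5) V(3)] sqrt_eig[OF p2 q2 V(2) V(6) V(4)] by simp
    also have "\<dots> = S2 (uvec j)" unfolding V(7) by (rule bop_lin2[OF b2 V(1,2), symmetric])
    finally show ?thesis .
  qed
  show ?thesis
  proof
    fix f
    show "S1 f = S2 f"
    proof (cases "f \<in> ell2")
      case False then show ?thesis using assms(1,2) by (simp add: sqpred_def)
    next
      case True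
      show ?thesis
      proof
        fix j
        have "S1 f j = ip (S1 f) (uvec j)" by (simp add: ip_uvec)
        also have "\<dots> = ip f (S1 (uvec j))" by (rule pos_selfadj[OF p1 True uvec_ell2])
        also have "\<dots> = ip f (S2 (uvec j))" using U by simp
        also have "\<dots> = ip (S2 f) (uvec j)" by (rule pos_selfadj[OF p2 True uvec_ell2, symmetric])
        also have "\<dots> = S2 f j" by (simp add: ip_uvec)
        finally show "S1 f j = S2 f j" .
      qed
    qed
  qed
qed

lemma op_sqrt_eq:
  assumes "sqpred A S" "spanhyp A"
  shows "op_sqrt A = S"
  unfolding op_sqrt_def
proof (rule the_equality)
  show "positive_op S \<and> (\<forall>f. f \<notin> ell2 \<longrightarrow> S f = (\<lambda>_. 0)) \<and> (\<forall>f\<in>ell2. S (S f) = A f)"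
    using assms(1) by (simp add: sqpred_def)
next
  fix S'
  assume "positive_op S' \<and> (\<forall>f. f \<notin> ell2 \<longrightarrow> S' f = (\<lambda>_. 0)) \<and> (\<forall>f\<in>ell2. S' (S' f) = A f)"
  then have "sqpred A S'" by (simp add: sqpred_def)
  then show "S' = S" using sqrt_unique assms by blast
qed

lemma eig2:
  fixes a b c :: real
  assumes "psd2 a b c"
  shows "\<exists>l m x1 x2 y1 y2 k1 k2. 0 \<le> l \<and> 0 \<le> m \<and> a * x1 + b * x2 = l * x1 \<and> b * x1 + c * x2 = l * x2 \<and>
    a * y1 + b * y2 = m * y1 \<and> b * y1 + c * y2 = m * y2 \<and> k1 * x1 + k2 * y1 = 1 \<and> k1 * x2 + k2 * y2 = 0"
proof (cases "b = 0")
  case True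
  then show ?thesis using assms unfolding psd2_def
    by (rule_tac x=a in exI, rule_tac x=c in exI, rule_tac x=1 in exI, rule_tac x=0 in exI,
        rule_tac x=0 in exI, rule_tac x=1 in exI, rule_tac x=1 in exI, rule_tac x=0 in exI) simp
next
  case False
  have P: "0 \<le> a" "0 \<le> c" "b\<^sup>2 \<le> a * c" using assms unfolding psd2_def by blast+
  define D where "D = sqrt ((a - c)\<^sup>2 + 4 * b\<^sup>2)"
  have D2: "D\<^sup>2 = (a - c)\<^sup>2 + 4 * b\<^sup>2" unfolding D_def by simp
  have Dp: "D > 0" unfolding D_def using False by (simp add: add_nonneg_pos)
  have "D \<le> a + c"
  proof -
    have "(a - c)\<^sup>2 + 4 * b\<^sup>2 \<le> (a + c)\<^sup>2" using P by (simp add: power2_eq_square algebra_simps)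
    then have "D \<le> sqrt ((a + c)\<^sup>2)" unfolding D_def by (rule real_sqrt_le_mono)
    then show ?thesis using P by simp
  qed
  define l where "l = (a + c + D) / 2"
  define m where "m = (a + c - D) / 2"
  define k1 where "k1 = (a - m) / (b * D)"
  define k2 where "k2 = (l - a) / (b * D)"
  have l0: "0 \<le> l" unfolding l_def using P Dp by simp
  have m0: "0 \<le> m" unfolding m_def using \<open>D \<le> a + c\<close> by simp
  have l2: "2 * l = a + c + D" unfolding l_def by simp
  have m2: "2 * m = a + c - D" unfolding m_def by simp
  have el: "b * b + c * (l - a) = l * (l - a)" using D2 l2 by algebra
  have em: "b * b + c * (m - a) = m * (m - a)" using D2 m2 by algebra
  have k1e: "k1 * b + k2 * b = 1" unfolding k1_def k2_def l_def m_def using False Dp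
    by (simp add: field_simps)
  have k2e: "k1 * (l - a) + k2 * (m - a) = 0" unfolding k1_def k2_def using False Dp
    by (simp add: field_simps)
  show ?thesis
    apply (rule exI[of _ l], rule exI[of _ m], rule exI[of _ b], rule exI[of _ "l - a"],
        rule exI[of _ b], rule exI[of _ "m - a"], rule exI[of _ k1], rule exI[of _ k2])
    using l0 m0 el em k1e k2e by (simp add: algebra_simps)
qed



lemma Mop_uvec_fixed:
  assumes "invol p" "cfok p c" "p j = j"
  shows "Mop p d c (uvec j) = (\<lambda>i. complex_of_real (d j) * uvec j i)"
proof -
  have pp: "\<And>j. p (p j) = j" using assms(1) by (simp add: invol_def)
  have "c j = 0" using assms by (simp add: cfok_def)
  then show ?thesis unfolding Mop_def uvec_def using assms(3) pp by (auto simp: fun_eq_iff)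
qed

lemma Mop_span:
  assumes "invol p" "cfok p c" "blocks_psd p d c" "\<And>f. f \<in> ell2 \<Longrightarrow> A f = Mop p d c f"
  shows "spanhyp A"
  unfolding spanhyp_def
proof
  fix j
  show "\<exists>V1 V2 l1 l2 k1 k2. V1 \<in> ell2 \<and> V2 \<in> ell2 \<and> 0 \<le> l1 \<and> 0 \<le> l2 \<and>
     A V1 = (\<lambda>i. complex_of_real l1 * V1 i) \<and> A V2 = (\<lambda>i. complex_of_real l2 * V2 i) \<and>
     uvec j = (\<lambda>i. k1 * V1 i + k2 * V2 i)"
  proof (cases "p j = j")
    case True
    have "0 \<le> d j" using assms(3) True by (simp add: blocks_psd_def)
    moreover have "A (uvec j) = (\<lambda>i. complex_of_real (d j) * uvec j i)"
      using assms(4)[OF uvec_ell2] Mop_uvec_fixed[OF assms(1,2) True] by simp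
    ultimately show ?thesis using uvec_ell2
      by (rule_tac x="uvec j" in exI, rule_tac x="uvec j" in exI, rule_tac x="d j" in exI,
          rule_tac x="d j" in exI, rule_tac x=1 in exI, rule_tac x=0 in exI) simp
  next
    case False
    have cp: "c (p j) = c j" using assms(2) by (simp add: cfok_def)
    have ps: "psd2 (d j) (c j) (d (p j))" using assms(3) False by (simp add: blocks_psd_def)
    obtain l m x1 x2 y1 y2 k1 k2 where E: "0 \<le> l" "0 \<le> m" "d j * x1 + c j * x2 = l * x1"
      "c j * x1 + d (p j) * x2 = l * x2" "d j * y1 + c j * y2 = m * y1" "c j * y1 + d (p j) * y2 = m * y2"
      "k1 * x1 + k2 * y1 = 1" "k1 * x2 + k2 * y2 = 0"
      using eig2[OF ps] by blast
    define V1 where "V1 = (\<lambda>i. complex_of_real x1 * uvec j i + complex_of_real x2 * uvec (p j) i)"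
    define V2 where "V2 = (\<lambda>i. complex_of_real y1 * uvec j i + complex_of_real y2 * uvec (p j) i)"
    have V1: "V1 \<in> ell2" unfolding V1_def by (intro ell2_add ell2_scale uvec_ell2)
    have V2: "V2 \<in> ell2" unfolding V2_def by (intro ell2_add ell2_scale uvec_ell2)
    have eig: "A (\<lambda>i. complex_of_real z1 * uvec j i + complex_of_real z2 * uvec (p j) i) =
        (\<lambda>i. complex_of_real e * (complex_of_real z1 * uvec j i + complex_of_real z2 * uvec (p j) i))"
      if "d j * z1 + c j * z2 = e * z1" "c j * z1 + d (p j) * z2 = e * z2" for z1 z2 e
    proof -
      have "(\<lambda>i. complex_of_real z1 * uvec j i + complex_of_real z2 * uvec (p j) i) \<in> ell2"
        by (intro ell2_add ell2_scale uvec_ell2)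
      then have "A (\<lambda>i. complex_of_real z1 * uvec j i + complex_of_real z2 * uvec (p j) i) =
        Mop p d c (\<lambda>i. complex_of_real z1 * uvec j i + complex_of_real z2 * uvec (p j) i)"
        by (rule assms(4))
      also have "\<dots> = (\<lambda>i. (complex_of_real (d j) * complex_of_real z1 + complex_of_real (c j) * complex_of_real z2) * uvec j i
          + (complex_of_real (d (p j)) * complex_of_real z2 + complex_of_real (c (p j)) * complex_of_real z1) * uvec (p j) i)"
        by (rule Mop_uvec2[OF assms(1)])
      also have "\<dots> = (\<lambda>i. complex_of_real (d j * z1 + c j * z2) * uvec j i
          + complex_of_real (c j * z1 + d (p j) * z2) * uvec (p j) i)"
        using cp by (simp add: algebra_simps)
      also have "\<dots> = (\<lambda>i. complex_of_real (e * z1) * uvec j i + complex_of_real (e * z2) * uvec (p j) i)"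
        using that by simp
      also have "\<dots> = (\<lambda>i. complex_of_real e * (complex_of_real z1 * uvec j i + complex_of_real z2 * uvec (p j) i))"
        by (simp add: algebra_simps)
      finally show ?thesis .
    qed
    have A1: "A V1 = (\<lambda>i. complex_of_real l * V1 i)" unfolding V1_def using eig[OF E(3,4)] .
    have A2: "A V2 = (\<lambda>i. complex_of_real m * V2 i)" unfolding V2_def using eig[OF E(5,6)] .
    have U: "uvec j = (\<lambda>i. complex_of_real k1 * V1 i + complex_of_real k2 * V2 i)"
    proof
      fix i
      have "complex_of_real k1 * V1 i + complex_of_real k2 * V2 i =
        complex_of_real (k1 * x1 + k2 * y1) * uvec j i + complex_of_real (k1 * x2 + k2 * y2) * uvec (p j) i"
        unfolding V1_def V2_def by (simp add: algebra_simps)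
      also have "\<dots> = uvec j i" using E(7,8) False by (simp add: uvec_def)
      finally show "uvec j i = complex_of_real k1 * V1 i + complex_of_real k2 * V2 i" by simp
    qed
    show ?thesis using V1 V2 E(1,2) A1 A2 U by blast
  qed
qed

lemma op_sqrt_Mop:
  assumes "invol p" "cfok p c" "bnd d" "blocks_psd p d c" "\<And>f. f \<in> ell2 \<Longrightarrow> A f = Mop p d c f"
  shows "op_sqrt A = (\<lambda>f. if f \<in> ell2 then Mop p (sqd p d c) (sqc p d c) f else (\<lambda>_. 0))"
proof (rule op_sqrt_eq)
  show "spanhyp A" by (rule Mop_span[OF assms(1,2,4,5)])
  have bs: "bnd (sqd p d c)" "bnd (sqc p d c)" using sq_bnd[OF assms(1,2,4,3)] by auto
  have pos: "positive_op (Mop p (sqd p d c) (sqc p d c))"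
    using Mop_positive_iff[OF assms(1) bs sq_cfok[OF assms(1,2)]] sq_blocks[OF assms(1,2,4)] by simp
  show "sqpred A (\<lambda>f. if f \<in> ell2 then Mop p (sqd p d c) (sqc p d c) f else (\<lambda>_. 0))"
    unfolding sqpred_def
  proof (intro conjI allI ballI impI)
    show "positive_op (\<lambda>f. if f \<in> ell2 then Mop p (sqd p d c) (sqc p d c) f else (\<lambda>_. 0))"
      using pos by (subst positive_op_cong[where B="Mop p (sqd p d c) (sqc p d c)"]) auto
  next
    fix f :: "'a \<Rightarrow> complex" assume "f \<notin> ell2"
    then show "(if f \<in> ell2 then Mop p (sqd p d c) (sqc p d c) f else (\<lambda>_. 0)) = (\<lambda>_. 0)" by simp
  next
    fix f :: "'a \<Rightarrow> complex" assume f: "f \<in> ell2"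
    have M: "Mop p (sqd p d c) (sqc p d c) f \<in> ell2" using Mop_ell2[OF assms(1) bs f] .
    show "(if (if f \<in> ell2 then Mop p (sqd p d c) (sqc p d c) f else (\<lambda>_. 0)) \<in> ell2
           then Mop p (sqd p d c) (sqc p d c) (if f \<in> ell2 then Mop p (sqd p d c) (sqc p d c) f else (\<lambda>_. 0))
           else (\<lambda>_. 0)) = A f"
      using f M sq_comp[OF assms(1,2,4)] assms(5)[OF f] by simp
  qed
qed



definition Sh :: "('i \<Rightarrow> 'i) \<Rightarrow> ('i \<Rightarrow> 'i) \<Rightarrow> ('i \<Rightarrow> real) \<Rightarrow> ('i \<Rightarrow> complex) \<Rightarrow> ('i \<Rightarrow> complex)" where
  "Sh \<sigma> \<tau> w f = (\<lambda>k. if k \<in> range \<sigma> then complex_of_real (w (\<tau> k)) * f (\<tau> k) else 0)"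

definition Bsh :: "('i \<Rightarrow> 'i) \<Rightarrow> ('i \<Rightarrow> real) \<Rightarrow> ('i \<Rightarrow> complex) \<Rightarrow> ('i \<Rightarrow> complex)" where
  "Bsh \<sigma> w g = (\<lambda>m. complex_of_real (w m) * g (\<sigma> m))"

lemma ip_uvec_left: "ip (uvec m) h = cnj (h m)"
  by (metis ip_cnj ip_uvec)

lemma adj_eq:
  assumes "\<forall>g. g \<notin> ell2 \<longrightarrow> B0 g = (\<lambda>_. 0)" "\<forall>g\<in>ell2. B0 g \<in> ell2"
    "\<forall>f\<in>ell2. \<forall>g\<in>ell2. ip (A f) g = ip f (B0 g)"
  shows "adj A = B0"
  unfolding adj_def
proof (rule the_equality)
  show "(\<forall>g. g \<notin> ell2 \<longrightarrow> B0 g = (\<lambda>_. 0)) \<and> (\<forall>g\<in>ell2. B0 g \<in> ell2) \<and>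
     (\<forall>f\<in>ell2. \<forall>g\<in>ell2. ip (A f) g = ip f (B0 g))" using assms by blast
next
  fix B
  assume B: "(\<forall>g. g \<notin> ell2 \<longrightarrow> B g = (\<lambda>_. 0)) \<and> (\<forall>g\<in>ell2. B g \<in> ell2) \<and>
     (\<forall>f\<in>ell2. \<forall>g\<in>ell2. ip (A f) g = ip f (B g))"
  show "B = B0"
  proof
    fix g
    show "B g = B0 g"
    proof (cases "g \<in> ell2")
      case False then show ?thesis using B assms by simp
    next
      case True
      show ?thesis
      proof
        fix m
        have "cnj (B g m) = ip (uvec m) (B g)" by (simp add: ip_uvec_left)
        also have "\<dots> = ip (A (uvec m)) g" using B True uvec_ell2[of m] by metis
        also have "\<dots> = ip (uvec m) (B0 g)" using assms True uvec_ell2[of m] by metis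
        also have "\<dots> = cnj (B0 g m)" by (simp add: ip_uvec_left)
        finally show "B g m = B0 g m" by simp
      qed
    qed
  qed
qed

locale shiftloc =
  fixes \<sigma> \<tau> :: "'i \<Rightarrow> 'i" and w :: "'i \<Rightarrow> real" and K :: real
  assumes inv: "\<And>m. \<tau> (\<sigma> m) = m" and wb: "\<And>m. \<bar>w m\<bar> \<le> K"
begin

lemma inj_s: "inj \<sigma>" by (metis injI inv)

lemma reind: "infsum h (range \<sigma>) = infsum (\<lambda>m. h (\<sigma> m)) UNIV"
  using infsum_reindex[OF inj_s, of h] by (simp add: o_def)

lemma reind_s: "h summable_on (range \<sigma>) \<longleftrightarrow> (\<lambda>m. h (\<sigma> m)) summable_on UNIV"
  using summable_on_reindex[OF inj_s, of h] by (simp add: o_def)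

lemma K0: "0 \<le> K" using wb[of undefined] by linarith

lemma Sh_norms:
  "(\<lambda>k. (cmod (Sh \<sigma> \<tau> w f k))\<^sup>2) summable_on UNIV \<longleftrightarrow> (\<lambda>m. (cmod (complex_of_real (w m) * f m))\<^sup>2) summable_on UNIV"
proof -
  have "(\<lambda>k. (cmod (Sh \<sigma> \<tau> w f k))\<^sup>2) summable_on UNIV \<longleftrightarrow> (\<lambda>k. (cmod (Sh \<sigma> \<tau> w f k))\<^sup>2) summable_on range \<sigma>"
    by (rule summable_on_cong_neutral) (auto simp: Sh_def)
  also have "\<dots> \<longleftrightarrow> (\<lambda>m. (cmod (complex_of_real (w m) * f m))\<^sup>2) summable_on UNIV"
    unfolding reind_s by (simp add: Sh_def inv)
  finally show ?thesis .
qed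

lemma Sh_ell2: assumes "f \<in> ell2" shows "Sh \<sigma> \<tau> w f \<in> ell2"
proof -
  have "(\<lambda>m. complex_of_real (w m) * f m) \<in> ell2"
  proof (rule ell2_le(1))
    show "(\<lambda>m. complex_of_real K * f m) \<in> ell2" using assms by (rule ell2_scale)
    show "cmod (complex_of_real (w m) * f m) \<le> cmod (complex_of_real K * f m)" for m
      using wb[of m] K0 by (simp add: norm_mult mult_right_mono)
  qed
  then show ?thesis unfolding ell2_def using Sh_norms by simp
qed

lemma Bsh_ell2: assumes "g \<in> ell2" shows "Bsh \<sigma> w g \<in> ell2"
proof -
  have "(\<lambda>k. (cmod (g k))\<^sup>2) summable_on range \<sigma>"
    using assms summable_on_subset[of _ UNIV "range \<sigma>"] by (auto simp: ell2_def)
  then have gs: "(\<lambda>m. g (\<sigma> m)) \<in> ell2" unfolding reind_s ell2_def by simp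
  show ?thesis
  proof (rule ell2_le(1))
    show "(\<lambda>m. complex_of_real K * g (\<sigma> m)) \<in> ell2" using gs by (rule ell2_scale)
    show "cmod (Bsh \<sigma> w g m) \<le> cmod (complex_of_real K * g (\<sigma> m))" for m
      using wb[of m] K0 by (simp add: Bsh_def norm_mult mult_right_mono)
  qed
qed

lemma Sh_ip: assumes "f \<in> ell2" "g \<in> ell2"
  shows "ip (Sh \<sigma> \<tau> w f) g = ip f (Bsh \<sigma> w g)"
proof -
  have "ip (Sh \<sigma> \<tau> w f) g = infsum (\<lambda>k. Sh \<sigma> \<tau> w f k * cnj (g k)) (range \<sigma>)"
    unfolding ip_def by (rule infsum_cong_neutral) (auto simp: Sh_def)
  also have "\<dots> = infsum (\<lambda>m. Sh \<sigma> \<tau> w f (\<sigma> m) * cnj (g (\<sigma> m))) UNIV" by (rule reind)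
  also have "\<dots> = ip f (Bsh \<sigma> w g)"
    unfolding ip_def by (simp add: Sh_def Bsh_def inv mult.assoc mult.left_commute)
  finally show ?thesis .
qed

lemma adj_Sh: "adj (Sh \<sigma> \<tau> w) = (\<lambda>g. if g \<in> ell2 then Bsh \<sigma> w g else (\<lambda>_. 0))"
  by (rule adj_eq) (auto simp: Bsh_ell2 Sh_ip)

end



definition s1 :: "nat \<times> nat \<Rightarrow> nat \<times> nat" where "s1 = (\<lambda>(m1, m2). (Suc m1, m2))"
definition t1 :: "nat \<times> nat \<Rightarrow> nat \<times> nat" where "t1 = (\<lambda>(k1, k2). (k1 - 1, k2))"
definition s2 :: "nat \<times> nat \<Rightarrow> nat \<times> nat" where "s2 = (\<lambda>(m1, m2). (m1, Suc m2))"
definition t2 :: "nat \<times> nat \<Rightarrow> nat \<times> nat" where "t2 = (\<lambda>(k1, k2). (k1, k2 - 1))"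

lemma range_s1: "(k1, k2) \<in> range s1 \<longleftrightarrow> k1 \<noteq> 0"
  unfolding s1_def by (auto simp: image_iff) (metis Suc_pred)
lemma range_s2: "(k1, k2) \<in> range s2 \<longleftrightarrow> k2 \<noteq> 0"
  unfolding s2_def by (auto simp: image_iff) (metis Suc_pred)

lemma shift1_Sh: "shift1 w = Sh s1 t1 w"
  by (auto simp: fun_eq_iff shift1_def Sh_def range_s1 t1_def)
lemma shift2_Sh: "shift2 w = Sh s2 t2 w"
  by (auto simp: fun_eq_iff shift2_def Sh_def range_s2 t2_def)

lemma shiftloc1: "(\<And>m. \<bar>w m\<bar> \<le> K) \<Longrightarrow> shiftloc s1 t1 w K"
  by unfold_locales (auto simp: s1_def t1_def)
lemma shiftloc2: "(\<And>m. \<bar>w m\<bar> \<le> K) \<Longrightarrow> shiftloc s2 t2 w K"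
  by unfold_locales (auto simp: s2_def t2_def)

lemma ell2_Inl: assumes "f \<in> ell2" shows "(\<lambda>i. f (Inl i)) \<in> ell2"
proof -
  have "(\<lambda>k. (cmod (f k))\<^sup>2) summable_on range Inl"
    using assms summable_on_subset[of _ UNIV "range Inl"] by (auto simp: ell2_def)
  then show ?thesis using summable_on_reindex[of Inl UNIV "\<lambda>k. (cmod (f k))\<^sup>2"]
    by (simp add: ell2_def o_def)
qed
lemma ell2_Inr: assumes "f \<in> ell2" shows "(\<lambda>i. f (Inr i)) \<in> ell2"
proof -
  have "(\<lambda>k. (cmod (f k))\<^sup>2) summable_on range Inr"
    using assms summable_on_subset[of _ UNIV "range Inr"] by (auto simp: ell2_def)
  then show ?thesis using summable_on_reindex[of Inr UNIV "\<lambda>k. (cmod (f k))\<^sup>2"]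
    by (simp add: ell2_def o_def)
qed

fun ppi :: "(nat \<times> nat) + (nat \<times> nat) \<Rightarrow> (nat \<times> nat) + (nat \<times> nat)" where
  "ppi (Inl (k1, k2)) = (if k1 = 0 then Inl (k1, k2) else Inr (k1 - 1, k2 + 1))"
| "ppi (Inr (j1, j2)) = (if j2 = 0 then Inr (j1, j2) else Inl (j1 + 1, j2 - 1))"

lemma invol_ppi: "invol ppi"
  unfolding invol_def
proof
  fix j show "ppi (ppi j) = j"
    by (cases j rule: ppi.cases) auto
qed

fun dLw :: "(nat \<times> nat \<Rightarrow> real) \<Rightarrow> (nat \<times> nat \<Rightarrow> real) \<Rightarrow> (nat \<times> nat) + (nat \<times> nat) \<Rightarrow> real" where
  "dLw al be (Inl k) = (al k)\<^sup>2"
| "dLw al be (Inr j) = (be j)\<^sup>2"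
fun cLw :: "(nat \<times> nat \<Rightarrow> real) \<Rightarrow> (nat \<times> nat \<Rightarrow> real) \<Rightarrow> (nat \<times> nat) + (nat \<times> nat) \<Rightarrow> real" where
  "cLw al be (Inl (k1, k2)) = (if k1 = 0 then 0 else be (k1, k2) * al (k1 - 1, k2 + 1))"
| "cLw al be (Inr (j1, j2)) = (if j2 = 0 then 0 else al (j1, j2) * be (j1 + 1, j2 - 1))"
fun dRw :: "(nat \<times> nat \<Rightarrow> real) \<Rightarrow> (nat \<times> nat \<Rightarrow> real) \<Rightarrow> (nat \<times> nat) + (nat \<times> nat) \<Rightarrow> real" where
  "dRw al be (Inl (k1, k2)) = (if k1 = 0 then 0 else (al (k1 - 1, k2))\<^sup>2)"
| "dRw al be (Inr (j1, j2)) = (if j2 = 0 then 0 else (be (j1, j2 - 1))\<^sup>2)"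
fun cRw :: "(nat \<times> nat \<Rightarrow> real) \<Rightarrow> (nat \<times> nat \<Rightarrow> real) \<Rightarrow> (nat \<times> nat) + (nat \<times> nat) \<Rightarrow> real" where
  "cRw al be (Inl (k1, k2)) = (if k1 = 0 then 0 else al (k1 - 1, k2) * be (k1 - 1, k2))"
| "cRw al be (Inr (j1, j2)) = (if j2 = 0 then 0 else be (j1, j2 - 1) * al (j1, j2 - 1))"

context
  fixes al be :: "nat \<times> nat \<Rightarrow> real" and K :: real
  assumes alb: "\<And>m. \<bar>al m\<bar> \<le> K" and beb: "\<And>m. \<bar>be m\<bar> \<le> K"
begin

interpretation A: shiftloc s1 t1 al K by (rule shiftloc1[OF alb])
interpretation B: shiftloc s2 t2 be K by (rule shiftloc2[OF beb])

lemma adj1: "adj (shift1 al) = (\<lambda>g. if g \<in> ell2 then Bsh s1 al g else (\<lambda>_. 0))"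
  unfolding shift1_Sh by (rule A.adj_Sh)
lemma adj2: "adj (shift2 be) = (\<lambda>g. if g \<in> ell2 then Bsh s2 be g else (\<lambda>_. 0))"
  unfolding shift2_Sh by (rule B.adj_Sh)
lemma sh1_ell2: "f \<in> ell2 \<Longrightarrow> shift1 al f \<in> ell2" unfolding shift1_Sh by (rule A.Sh_ell2)
lemma sh2_ell2: "f \<in> ell2 \<Longrightarrow> shift2 be f \<in> ell2" unfolding shift2_Sh by (rule B.Sh_ell2)
lemma b1_ell2: "f \<in> ell2 \<Longrightarrow> Bsh s1 al f \<in> ell2" by (rule A.Bsh_ell2)
lemma b2_ell2: "f \<in> ell2 \<Longrightarrow> Bsh s2 be f \<in> ell2" by (rule B.Bsh_ell2)

lemma L_Mop:
  assumes f: "f \<in> ell2"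
  shows "opmat (adj (shift1 al) \<circ> shift1 al) (adj (shift2 be) \<circ> shift1 al)
                (adj (shift1 al) \<circ> shift2 be) (adj (shift2 be) \<circ> shift2 be) f
       = Mop ppi (dLw al be) (cLw al be) f"
proof -
  have v1: "f \<circ> Inl \<in> ell2" using ell2_Inl[OF f] by (simp add: o_def)
  have v2: "f \<circ> Inr \<in> ell2" using ell2_Inr[OF f] by (simp add: o_def)
  show ?thesis
  proof
    fix j show "opmat (adj (shift1 al) \<circ> shift1 al) (adj (shift2 be) \<circ> shift1 al)
                (adj (shift1 al) \<circ> shift2 be) (adj (shift2 be) \<circ> shift2 be) f j = Mop ppi (dLw al be) (cLw al be) f j"
    proof (cases j rule: ppi.cases)
      case (1 k1 k2)
      then show ?thesis using v1 v2 sh1_ell2[OF v1] sh1_ell2[OF v2] sh2_ell2[OF v1] sh2_ell2[OF v2]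
        by (auto simp: opmat_def adj1 adj2 Mop_def Bsh_def shift1_def shift2_def s1_def s2_def power2_eq_square)
    next
      case (2 j1 j2)
      then show ?thesis using v1 v2 sh1_ell2[OF v1] sh1_ell2[OF v2] sh2_ell2[OF v1] sh2_ell2[OF v2]
        by (auto simp: opmat_def adj1 adj2 Mop_def Bsh_def shift1_def shift2_def s1_def s2_def power2_eq_square)
    qed
  qed
qed

lemma R_Mop:
  assumes f: "f \<in> ell2"
  shows "opmat (shift1 al \<circ> adj (shift1 al)) (shift1 al \<circ> adj (shift2 be))
                (shift2 be \<circ> adj (shift1 al)) (shift2 be \<circ> adj (shift2 be)) f
       = Mop ppi (dRw al be) (cRw al be) f"
proof -
  have v1: "f \<circ> Inl \<in> ell2" using ell2_Inl[OF f] by (simp add: o_def)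
  have v2: "f \<circ> Inr \<in> ell2" using ell2_Inr[OF f] by (simp add: o_def)
  show ?thesis
  proof
    fix j show "opmat (shift1 al \<circ> adj (shift1 al)) (shift1 al \<circ> adj (shift2 be))
                (shift2 be \<circ> adj (shift1 al)) (shift2 be \<circ> adj (shift2 be)) f j = Mop ppi (dRw al be) (cRw al be) f j"
    proof (cases j rule: ppi.cases)
      case (1 k1 k2)
      then show ?thesis using v1 v2
        by (auto simp: opmat_def adj1 adj2 Mop_def Bsh_def shift1_def shift2_def s1_def s2_def power2_eq_square)
    next
      case (2 j1 j2)
      then show ?thesis using v1 v2
        by (auto simp: opmat_def adj1 adj2 Mop_def Bsh_def shift1_def shift2_def s1_def s2_def power2_eq_square)
    qed
  qed
qed

end



definition sd :: "real \<Rightarrow> real \<Rightarrow> real \<Rightarrow> real" where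
  "sd P1 P2 Q = (P1 + sqrt (P1 * P2 - Q\<^sup>2)) / sqrt (P1 + P2 + 2 * sqrt (P1 * P2 - Q\<^sup>2))"
definition sc :: "real \<Rightarrow> real \<Rightarrow> real \<Rightarrow> real" where
  "sc P1 P2 Q = Q / sqrt (P1 + P2 + 2 * sqrt (P1 * P2 - Q\<^sup>2))"

lemma sdL:
  fixes u :: real assumes "0 < u" "u < 1"
  shows "sd 1 1 u = (sqrt (1 + u) + sqrt (1 - u)) / 2" "sc 1 1 u = (sqrt (1 + u) - sqrt (1 - u)) / 2"
proof -
  define P where "P = sqrt (1 + u)"
  define Q where "Q = sqrt (1 - u)"
  have P2: "P\<^sup>2 = 1 + u" and Q2: "Q\<^sup>2 = 1 - u" using assms by (simp_all add: P_def Q_def)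
  have P0: "P > 0" and Q0: "Q > 0" using assms by (simp_all add: P_def Q_def)
  have s: "sqrt (1 * 1 - u\<^sup>2) = P * Q"
    unfolding P_def Q_def by (simp add: real_sqrt_mult[symmetric] power2_eq_square algebra_simps)
  have "(P + Q)\<^sup>2 = 1 + 1 + 2 * (P * Q)" using P2 Q2 by (simp add: power2_sum)
  then have t: "sqrt (1 + 1 + 2 * (P * Q)) = P + Q" using P0 Q0
    by (metis add_pos_pos less_eq_real_def real_sqrt_abs abs_of_pos)
  have "sd 1 1 u = (1 + P * Q) / (P + Q)" unfolding sd_def s t ..
  also have "\<dots> = (P + Q) / 2"
  proof -
    have "2 * (1 + P * Q) = (P + Q) * (P + Q)" using P2 Q2 by (simp add: power2_eq_square algebra_simps)
    then show ?thesis using P0 Q0 by (simp add: field_simps)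
  qed
  finally show "sd 1 1 u = (sqrt (1 + u) + sqrt (1 - u)) / 2" by (simp add: P_def Q_def)
  have "sc 1 1 u = u / (P + Q)" unfolding sc_def s t ..
  also have "\<dots> = (P - Q) / 2"
  proof -
    have "2 * u = (P - Q) * (P + Q)" using P2 Q2 by (simp add: power2_eq_square algebra_simps)
    then show ?thesis using P0 Q0 by (simp add: field_simps)
  qed
  finally show "sc 1 1 u = (sqrt (1 + u) - sqrt (1 - u)) / 2" by (simp add: P_def Q_def)
qed

lemma sdR:
  fixes x y :: real assumes "0 < x" "0 < y"
  shows "sd (x\<^sup>2) (y\<^sup>2) (x * y) = x\<^sup>2 / sqrt (x\<^sup>2 + y\<^sup>2)"
    "sd (y\<^sup>2) (x\<^sup>2) (x * y) = y\<^sup>2 / sqrt (x\<^sup>2 + y\<^sup>2)"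
    "sc (x\<^sup>2) (y\<^sup>2) (x * y) = x * y / sqrt (x\<^sup>2 + y\<^sup>2)"
  unfolding sd_def sc_def by (simp_all add: power_mult_distrib algebra_simps)

lemma G:
  fixes u x y :: real
  assumes u: "0 < u" "u < 1" and xy: "0 < x" "0 < y" "x\<^sup>2 + y\<^sup>2 < 2"
  shows "psd2 (sd 1 1 u - sd (x\<^sup>2) (y\<^sup>2) (x * y)) (sc 1 1 u - sc (x\<^sup>2) (y\<^sup>2) (x * y)) (sd 1 1 u - sd (y\<^sup>2) (x\<^sup>2) (x * y))
     \<longleftrightarrow> (x + y)\<^sup>2 + sqrt (1 + u) / sqrt (1 - u) * (x - y)\<^sup>2 \<le> 2 * sqrt (x\<^sup>2 + y\<^sup>2) * sqrt (1 + u)"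
proof -
  define P where "P = sqrt (1 + u)"
  define Q where "Q = sqrt (1 - u)"
  define n where "n = sqrt (x\<^sup>2 + y\<^sup>2)"
  have P2: "P\<^sup>2 = 1 + u" and Q2: "Q\<^sup>2 = 1 - u" using u by (simp_all add: P_def Q_def)
  have P0: "P > 0" and Q0: "Q > 0" using u by (simp_all add: P_def Q_def)
  have n2: "n\<^sup>2 = x\<^sup>2 + y\<^sup>2" unfolding n_def by simp
  have n0: "n > 0" unfolding n_def using xy by (simp add: add_pos_pos)
  define A1 where "A1 = (P + Q) / 2 - x\<^sup>2 / n"
  define A2 where "A2 = (P + Q) / 2 - y\<^sup>2 / n"
  define B where "B = (P - Q) / 2 - x * y / n"
  have e: "sd 1 1 u - sd (x\<^sup>2) (y\<^sup>2) (x * y) = A1" "sc 1 1 u - sc (x\<^sup>2) (y\<^sup>2) (x * y) = B"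
    "sd 1 1 u - sd (y\<^sup>2) (x\<^sup>2) (x * y) = A2"
    using sdL[OF u] sdR[OF xy(1,2)] by (simp_all add: A1_def A2_def B_def P_def Q_def n_def)
  have det: "A1 * A2 - B\<^sup>2 = P * Q - (P + Q) * n / 2 + (P - Q) * x * y / n"
  proof -
    have "A1 * A2 - B\<^sup>2 = ((P + Q)\<^sup>2 - (P - Q)\<^sup>2) / 4 - (P + Q) * (x\<^sup>2 + y\<^sup>2) / (2 * n) + (P - Q) * x * y / n"
      unfolding A1_def A2_def B_def using n0 by (simp add: field_simps power2_eq_square)
    also have "\<dots> = P * Q - (P + Q) * n / 2 + (P - Q) * x * y / n"
      unfolding n2[symmetric] using n0 by (simp add: field_simps power2_eq_square)
    finally show ?thesis .
  qed
  have key: "(2 * n / Q) * (A1 * A2 - B\<^sup>2) = 2 * n * P - ((x + y)\<^sup>2 + P / Q * (x - y)\<^sup>2)"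
  proof -
    have "(2 * n / Q) * (A1 * A2 - B\<^sup>2) = 2 * n * P - (P + Q) * n\<^sup>2 / Q + 2 * (P - Q) * x * y / Q"
      unfolding det using n0 Q0 by (simp add: field_simps power2_eq_square)
    also have "\<dots> = 2 * n * P - ((x + y)\<^sup>2 + P / Q * (x - y)\<^sup>2)"
      unfolding n2 using Q0 by (simp add: field_simps power2_eq_square)
    finally show ?thesis .
  qed
  have tr: "A1 + A2 > 0"
  proof -
    have pq: "(P + Q)\<^sup>2 = 2 + 2 * (P * Q)" using P2 Q2 by (simp add: power2_sum)
    have "0 < P * Q" using P0 Q0 by simp
    then have "n\<^sup>2 < (P + Q)\<^sup>2" using n2 xy(3) pq by linarith
    then have "n < P + Q" using P0 Q0 n0 by (simp add: power_less_imp_less_base)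
    moreover have "A1 + A2 = P + Q - (x\<^sup>2 + y\<^sup>2) / n" unfolding A1_def A2_def using n0 by (simp add: field_simps)
    moreover have "(x\<^sup>2 + y\<^sup>2) / n = n" unfolding n2[symmetric] using n0 by (simp add: power2_eq_square)
    ultimately show ?thesis by simp
  qed
  have fac: "2 * n / Q > 0" using n0 Q0 by simp
  have "psd2 A1 B A2 \<longleftrightarrow> 0 \<le> A1 * A2 - B\<^sup>2"
  proof
    assume "psd2 A1 B A2" then show "0 \<le> A1 * A2 - B\<^sup>2" by (simp add: psd2_def)
  next
    assume d: "0 \<le> A1 * A2 - B\<^sup>2"
    then have "0 \<le> A1 * A2" by (smt (verit) zero_le_power2)
    then have "0 \<le> A1 \<and> 0 \<le> A2" using tr by (smt (verit) mult_nonneg_nonneg mult_neg_neg zero_le_mult_iff)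
    then show "psd2 A1 B A2" using d by (simp add: psd2_def)
  qed
  also have "\<dots> \<longleftrightarrow> 0 \<le> (2 * n / Q) * (A1 * A2 - B\<^sup>2)" by (simp only: zero_le_mult_iff) (use fac in auto)
  also have "\<dots> \<longleftrightarrow> (x + y)\<^sup>2 + P / Q * (x - y)\<^sup>2 \<le> 2 * n * P" unfolding key by simp
  finally show ?thesis unfolding e P_def Q_def n_def .
qed

lemma H:
  fixes a :: real assumes "0 < a" "a < 1"
  shows "(a + 1)\<^sup>2 + sqrt (1 + a) / sqrt (1 - a) * (a - 1)\<^sup>2 \<le> 2 * sqrt (a\<^sup>2 + 1\<^sup>2) * sqrt (1 + a)"
proof -
  define P where "P = sqrt (1 + a)"
  define Q where "Q = sqrt (1 - a)"
  define n where "n = sqrt (a\<^sup>2 + 1)"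
  have P2: "P\<^sup>2 = 1 + a" and Q2: "Q\<^sup>2 = 1 - a" using assms by (simp_all add: P_def Q_def)
  have P0: "P > 0" and Q0: "Q > 0" using assms by (simp_all add: P_def Q_def)
  have n2: "n\<^sup>2 = a\<^sup>2 + 1" unfolding n_def by simp
  have n0: "n > 0" unfolding n_def by (intro real_sqrt_gt_zero add_nonneg_pos) simp_all
  have PQ: "(P * Q)\<^sup>2 = 1 - a\<^sup>2" unfolding power_mult_distrib P2 Q2 by (simp add: power2_eq_square algebra_simps)
  have PQ1: "P * Q \<le> 1"
  proof -
    have "(P * Q)\<^sup>2 \<le> 1\<^sup>2" using PQ by simp
    then show ?thesis using power2_le_imp_le[of "P*Q" 1] by simp
  qed
  have PQ0: "0 \<le> P * Q" using P0 Q0 by simp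
  have cube: "(P * Q)^3 \<le> (P * Q)\<^sup>2"
  proof -
    have "(P * Q)^3 = (P * Q)\<^sup>2 * (P * Q)" by (simp add: power2_eq_square power3_eq_cube)
    also have "\<dots> \<le> (P * Q)\<^sup>2 * 1" using PQ1 by (rule_tac mult_left_mono) simp_all
    finally show ?thesis by simp
  qed
  have sq: "(P^3 + Q^3)\<^sup>2 \<le> (2 * n)\<^sup>2"
  proof -
    have "(P^3 + Q^3)\<^sup>2 = (P\<^sup>2)^3 + (Q\<^sup>2)^3 + 2 * (P * Q)^3"
      by (simp add: power2_eq_square power3_eq_cube algebra_simps)
    also have "\<dots> = 2 + 6 * a\<^sup>2 + 2 * (P * Q)^3" unfolding P2 Q2 by (simp add: power2_eq_square power3_eq_cube algebra_simps)
    also have "\<dots> \<le> 2 + 6 * a\<^sup>2 + 2 * (1 - a\<^sup>2)" using cube PQ by simp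
    also have "\<dots> = (2 * n)\<^sup>2" using n2 by (simp add: power_mult_distrib)
    finally show ?thesis .
  qed
  have le: "P^3 + Q^3 \<le> 2 * n" using power2_le_imp_le[OF sq] n0 by simp
  have "(a + 1)\<^sup>2 + P / Q * (a - 1)\<^sup>2 = P * (P^3 + Q^3)"
  proof -
    have p4: "P^4 = (P\<^sup>2)\<^sup>2" "Q^4 = (Q\<^sup>2)\<^sup>2" by (simp_all flip: power_mult)
    have A: "(a + 1)\<^sup>2 = P^4" unfolding p4 P2 by (simp only: add.commute)
    have B: "(a - 1)\<^sup>2 = Q^4" unfolding p4 Q2 by (simp only: power2_commute)
    have C: "P / Q * Q^4 = P * Q^3"
    proof -
      have "Q^4 = Q * Q^3" by (simp add: power_Suc[symmetric] del: power_Suc)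
      then show ?thesis using Q0 by simp
    qed
    have D: "P^4 = P * P^3" by (simp add: power_Suc[symmetric] del: power_Suc)
    show ?thesis unfolding A B C D by (simp only: distrib_left)
  qed
  also have "\<dots> \<le> P * (2 * n)" using le P0 by (rule_tac mult_left_mono) auto
  finally show ?thesis unfolding P_def Q_def n_def by (simp add: mult_ac)
qed



lemma sq_vals:
  assumes "invol p" "cfok p c" "p j \<noteq> j"
  shows "sqd p d c j = sd (d j) (d (p j)) (c j)" "sqd p d c (p j) = sd (d (p j)) (d j) (c j)"
    "sqc p d c j = sc (d j) (d (p j)) (c j)"
proof -
  have pp: "p (p j) = j" using assms(1) by (simp add: invol_def)
  have cp: "c (p j) = c j" using assms(2) by (simp add: cfok_def)
  show "sqd p d c j = sd (d j) (d (p j)) (c j)" "sqd p d c (p j) = sd (d (p j)) (d j) (c j)"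
    "sqc p d c j = sc (d j) (d (p j)) (c j)"
    unfolding sqd_def sqc_def sqt_def sqs_def sd_def sc_def using pp cp by simp_all
qed

lemma sq_fixed_zero:
  assumes "p j = j" "cfok p c" "blocks_psd p d c" "d j = 0"
  shows "sqd p d c j = 0"
  using sq_fixed(1)[OF assms(1-3)] assms(4) by simp

lemma bnd_diff: "bnd f \<Longrightarrow> bnd g \<Longrightarrow> bnd (\<lambda>j. f j - g j)"
proof -
  assume "bnd f" "bnd g"
  then obtain K1 K2 where K: "\<And>j. \<bar>f j\<bar> \<le> K1" "\<And>j. \<bar>g j\<bar> \<le> K2" by (auto simp: bnd_def)
  have "\<bar>f j - g j\<bar> \<le> K1 + K2" for j using abs_triangle_ineq4[of "f j" "g j"] K[of j] by linarith
  then show ?thesis unfolding bnd_def by blast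
qed

lemma cfok_diff: "cfok p f \<Longrightarrow> cfok p g \<Longrightarrow> cfok p (\<lambda>j. f j - g j)"
  unfolding cfok_def by auto

lemma Mop_diff: "Mop p d1 c1 f j - Mop p d2 c2 f j = Mop p (\<lambda>j. d1 j - d2 j) (\<lambda>j. c1 j - c2 j) f j"
  unfolding Mop_def by (simp add: algebra_simps)

lemma cfok_cL: "cfok ppi (cLw al be)"
  unfolding cfok_def
proof (intro conjI allI impI)
  fix j show "cLw al be (ppi j) = cLw al be j" by (cases j rule: ppi.cases) auto
next
  fix j assume "ppi j = j" then show "cLw al be j = 0" by (cases j rule: ppi.cases) (auto split: if_splits)
qed

lemma cfok_cR: "cfok ppi (cRw al be)"
  unfolding cfok_def
proof (intro conjI allI impI)
  fix j show "cRw al be (ppi j) = cRw al be j" by (cases j rule: ppi.cases) auto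
next
  fix j assume "ppi j = j" then show "cRw al be j = 0" by (cases j rule: ppi.cases) (auto split: if_splits)
qed

lemma psdR: "blocks_psd ppi (dRw al be) (cRw al be)"
  unfolding blocks_psd_def
proof (intro allI conjI impI)
  fix j show "0 \<le> dRw al be j" if "ppi j = j" by (cases j rule: ppi.cases) auto
  show "psd2 (dRw al be j) (cRw al be j) (dRw al be (ppi j))" if "ppi j \<noteq> j"
    using that by (cases j rule: ppi.cases) (auto simp: psd2_def power_mult_distrib)
qed

lemma bnd_w:
  assumes "\<And>m. \<bar>al m\<bar> \<le> 1" "\<And>m. \<bar>be m\<bar> \<le> 1"
  shows "bnd (dLw al be)" "bnd (cLw al be)" "bnd (dRw al be)" "bnd (cRw al be)"
proof -
  have sq: "\<bar>z\<^sup>2\<bar> \<le> 1" if "\<bar>z\<bar> \<le> 1" for z :: real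
    using that by (simp add: abs_square_le_1)
  have pr: "\<bar>z * w\<bar> \<le> 1" if "\<bar>z\<bar> \<le> 1" "\<bar>w\<bar> \<le> 1" for z w :: real
    using that by (simp add: abs_mult mult_le_one)
  show "bnd (dLw al be)" unfolding bnd_def
    by (rule exI[of _ 1], intro allI, case_tac j rule: ppi.cases) (auto intro: sq assms simp: abs_square_le_1)
  show "bnd (cLw al be)" unfolding bnd_def
    by (rule exI[of _ 1], intro allI, case_tac j rule: ppi.cases) (auto intro: pr assms)
  show "bnd (dRw al be)" unfolding bnd_def
    by (rule exI[of _ 1], intro allI, case_tac j rule: ppi.cases) (auto intro: sq assms simp: abs_square_le_1)
  show "bnd (cRw al be)" unfolding bnd_def
    by (rule exI[of _ 1], intro allI, case_tac j rule: ppi.cases) (auto intro: pr assms)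
qed

lemma alphaW_eq: "alphaW a x y (k1, k2) = (if k1 = 0 \<and> k2 = 0 then x else if k1 = 0 then a else 1)"
  by (simp add: alphaW_def)
lemma betaW_eq: "betaW a x y (k1, k2) = (if k1 = 0 \<and> k2 = 0 then y else if k2 = 0 then a * y / x else 1)"
  by (simp add: betaW_def)



lemma shn_iff:
  fixes al be :: "nat \<times> nat \<Rightarrow> real"
  assumes wa: "\<And>m. \<bar>al m\<bar> \<le> 1" and wbb: "\<And>m. \<bar>be m\<bar> \<le> 1"
    and psdL: "blocks_psd ppi (dLw al be) (cLw al be)"
  shows "semi_hyponormal (shift1 al) (shift2 be) \<longleftrightarrow>
    blocks_psd ppi (\<lambda>j. sqd ppi (dLw al be) (cLw al be) j - sqd ppi (dRw al be) (cRw al be) j)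
                   (\<lambda>j. sqc ppi (dLw al be) (cLw al be) j - sqc ppi (dRw al be) (cRw al be) j)"
proof -
  let ?L = "opmat (adj (shift1 al) \<circ> shift1 al) (adj (shift2 be) \<circ> shift1 al)
                (adj (shift1 al) \<circ> shift2 be) (adj (shift2 be) \<circ> shift2 be)"
  let ?R = "opmat (shift1 al \<circ> adj (shift1 al)) (shift1 al \<circ> adj (shift2 be))
                (shift2 be \<circ> adj (shift1 al)) (shift2 be \<circ> adj (shift2 be))"
  have bw: "bnd (dLw al be)" "bnd (cLw al be)" "bnd (dRw al be)" "bnd (cRw al be)"
    using bnd_w[OF wa wbb] by auto
  have Leq: "\<And>f. f \<in> ell2 \<Longrightarrow> ?L f = Mop ppi (dLw al be) (cLw al be) f"
    by (rule L_Mop[OF wa wbb])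
  have Req: "\<And>f. f \<in> ell2 \<Longrightarrow> ?R f = Mop ppi (dRw al be) (cRw al be) f"
    by (rule R_Mop[OF wa wbb])
  have posL: "positive_op ?L"
    using positive_op_cong[of ?L "Mop ppi (dLw al be) (cLw al be)"] Leq
      Mop_positive_iff[OF invol_ppi bw(1,2) cfok_cL] psdL by simp
  have SL: "op_sqrt ?L = (\<lambda>f. if f \<in> ell2 then Mop ppi (sqd ppi (dLw al be) (cLw al be)) (sqc ppi (dLw al be) (cLw al be)) f else (\<lambda>_. 0))"
    by (rule op_sqrt_Mop[OF invol_ppi cfok_cL bw(1) psdL Leq])
  have SR: "op_sqrt ?R = (\<lambda>f. if f \<in> ell2 then Mop ppi (sqd ppi (dRw al be) (cRw al be)) (sqc ppi (dRw al be) (cRw al be)) f else (\<lambda>_. 0))"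
    by (rule op_sqrt_Mop[OF invol_ppi cfok_cR bw(3) psdR Req])
  have b1: "bnd (sqd ppi (dLw al be) (cLw al be))" "bnd (sqc ppi (dLw al be) (cLw al be))"
    using sq_bnd[OF invol_ppi cfok_cL psdL bw(1)] by auto
  have b2: "bnd (sqd ppi (dRw al be) (cRw al be))" "bnd (sqc ppi (dRw al be) (cRw al be))"
    using sq_bnd[OF invol_ppi cfok_cR psdR bw(3)] by auto
  have cf: "cfok ppi (\<lambda>j. sqc ppi (dLw al be) (cLw al be) j - sqc ppi (dRw al be) (cRw al be) j)"
    by (rule cfok_diff[OF sq_cfok[OF invol_ppi cfok_cL] sq_cfok[OF invol_ppi cfok_cR]])
  have "op_le (op_sqrt ?R) (op_sqrt ?L) \<longleftrightarrow>
      positive_op (Mop ppi (\<lambda>j. sqd ppi (dLw al be) (cLw al be) j - sqd ppi (dRw al be) (cRw al be) j)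
                   (\<lambda>j. sqc ppi (dLw al be) (cLw al be) j - sqc ppi (dRw al be) (cRw al be) j))"
    unfolding op_le_def SL SR
    by (rule positive_op_cong) (simp add: Mop_diff)
  also have "\<dots> \<longleftrightarrow> blocks_psd ppi (\<lambda>j. sqd ppi (dLw al be) (cLw al be) j - sqd ppi (dRw al be) (cRw al be) j)
                   (\<lambda>j. sqc ppi (dLw al be) (cLw al be) j - sqc ppi (dRw al be) (cRw al be) j)"
    by (rule Mop_positive_iff[OF invol_ppi bnd_diff[OF b1(1) b2(1)] bnd_diff[OF b1(2) b2(2)] cf])
  finally show ?thesis unfolding semi_hyponormal_def Let_def using posL by simp
qed



lemma psd2_swap: "psd2 a b c \<longleftrightarrow> psd2 c b a"
  unfolding psd2_def by (auto simp: mult.commute)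

context
  fixes a x y :: real
  assumes h: "0 < a" "a < 1" "0 < x" "x < 1" "0 < y" "y < 1" "a * y < x"
begin

lemma b_pos: "0 < a * y / x" using h by simp
lemma b_lt1: "a * y / x < 1" using h by simp
lemma u_pos: "0 < a * y / x * a" using h by simp
lemma u_lt1: "a * y / x * a < 1"
proof -
  have "a * y / x * a < 1 * 1" using b_lt1 h(2) b_pos h(1) by (intro mult_strict_mono) auto
  then show ?thesis by simp
qed

lemma wa: "\<bar>alphaW a x y m\<bar> \<le> 1"
  using h by (cases m) (auto simp: alphaW_eq)
lemma wbb: "\<bar>betaW a x y m\<bar> \<le> 1"
  using h b_lt1 b_pos by (cases m) (auto simp: betaW_eq)

lemma psdLc: "blocks_psd ppi (dLw (alphaW a x y) (betaW a x y)) (cLw (alphaW a x y) (betaW a x y))"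
  unfolding blocks_psd_def
proof (intro allI conjI impI)
  fix j
  show "0 \<le> dLw (alphaW a x y) (betaW a x y) j" if "ppi j = j" by (cases j rule: ppi.cases) auto
  have c1: "\<bar>cLw (alphaW a x y) (betaW a x y) j\<bar> \<le> 1"
    using bnd_w[OF wa wbb] by (cases j rule: ppi.cases) (auto simp: abs_mult intro!: mult_le_one wa wbb)
  show "psd2 (dLw (alphaW a x y) (betaW a x y) j) (cLw (alphaW a x y) (betaW a x y) j) (dLw (alphaW a x y) (betaW a x y) (ppi j))"
    if "ppi j \<noteq> j"
  proof -
    have "dLw (alphaW a x y) (betaW a x y) j = 1" "dLw (alphaW a x y) (betaW a x y) (ppi j) = 1"
      using that by (cases j rule: ppi.cases; auto simp: alphaW_eq betaW_eq split: if_splits)+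
    then show ?thesis using c1 by (simp add: psd2_def abs_square_le_1)
  qed
qed

abbreviation "dL \<equiv> dLw (alphaW a x y) (betaW a x y)"
abbreviation "cL \<equiv> cLw (alphaW a x y) (betaW a x y)"
abbreviation "dR \<equiv> dRw (alphaW a x y) (betaW a x y)"
abbreviation "cR \<equiv> cRw (alphaW a x y) (betaW a x y)"
abbreviation "Dd \<equiv> (\<lambda>j. sqd ppi dL cL j - sqd ppi dR cR j)"
abbreviation "Dc \<equiv> (\<lambda>j. sqc ppi dL cL j - sqc ppi dR cR j)"

definition Gineq :: bool where
  "Gineq \<longleftrightarrow> (x + y)\<^sup>2 + sqrt (1 + a * y / x * a) / sqrt (1 - a * y / x * a) * (x - y)\<^sup>2
     \<le> 2 * sqrt (x\<^sup>2 + y\<^sup>2) * sqrt (1 + a * y / x * a)"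

lemma pair_vals:
  assumes "k1 \<noteq> 0"
  shows "psd2 (Dd (Inl (k1, k2))) (Dc (Inl (k1, k2))) (Dd (Inr (k1 - 1, k2 + 1))) \<longleftrightarrow>
    psd2 (sd (dL (Inl (k1, k2))) (dL (Inr (k1 - 1, k2 + 1))) (cL (Inl (k1, k2))) - sd (dR (Inl (k1, k2))) (dR (Inr (k1 - 1, k2 + 1))) (cR (Inl (k1, k2))))
         (sc (dL (Inl (k1, k2))) (dL (Inr (k1 - 1, k2 + 1))) (cL (Inl (k1, k2))) - sc (dR (Inl (k1, k2))) (dR (Inr (k1 - 1, k2 + 1))) (cR (Inl (k1, k2))))
         (sd (dL (Inr (k1 - 1, k2 + 1))) (dL (Inl (k1, k2))) (cL (Inl (k1, k2))) - sd (dR (Inr (k1 - 1, k2 + 1))) (dR (Inl (k1, k2))) (cR (Inl (k1, k2))))"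
proof -
  have pj: "ppi (Inl (k1, k2)) = Inr (k1 - 1, k2 + 1)" "ppi (Inl (k1, k2)) \<noteq> Inl (k1, k2)" using assms by auto
  show ?thesis
    using sq_vals[OF invol_ppi cfok_cL pj(2), of dL] sq_vals[OF invol_ppi cfok_cR pj(2), of dR]
    unfolding pj(1) by simp
qed

lemma fixed_ok: "ppi j = j \<Longrightarrow> 0 \<le> Dd j"
proof -
  assume f: "ppi j = j"
  have "dR j = 0" using f by (cases j rule: ppi.cases) (auto split: if_splits)
  then have "sqd ppi dR cR j = 0" using sq_fixed_zero[OF f cfok_cR psdR] by simp
  moreover have "0 \<le> sqd ppi dL cL j" using sq_fixed(3)[OF f cfok_cL psdLc] .
  ultimately show ?thesis by simp
qed

lemma inl_case:
  assumes G1: Gineq and k: "k1 \<noteq> 0"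
  shows "psd2 (Dd (Inl (k1, k2))) (Dc (Inl (k1, k2))) (Dd (Inr (k1 - 1, k2 + 1)))"
  unfolding pair_vals[OF k]
proof -
  consider "k1 = 1" "k2 = 0" | "k1 = 1" "k2 \<noteq> 0" | "k1 \<noteq> 1" "k2 = 0" | "k1 \<noteq> 1" "k2 \<noteq> 0" by blast
  then show "psd2 (sd (dL (Inl (k1, k2))) (dL (Inr (k1 - 1, k2 + 1))) (cL (Inl (k1, k2))) - sd (dR (Inl (k1, k2))) (dR (Inr (k1 - 1, k2 + 1))) (cR (Inl (k1, k2))))
         (sc (dL (Inl (k1, k2))) (dL (Inr (k1 - 1, k2 + 1))) (cL (Inl (k1, k2))) - sc (dR (Inl (k1, k2))) (dR (Inr (k1 - 1, k2 + 1))) (cR (Inl (k1, k2))))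
         (sd (dL (Inr (k1 - 1, k2 + 1))) (dL (Inl (k1, k2))) (cL (Inl (k1, k2))) - sd (dR (Inr (k1 - 1, k2 + 1))) (dR (Inl (k1, k2))) (cR (Inl (k1, k2))))"
  proof cases
    case 1
    have x2: "x\<^sup>2 + y\<^sup>2 < 2" using h by (smt (verit) power_strict_mono zero_le_power2 power2_less_eq_zero_iff one_power2 power_less_one_iff)
    show ?thesis using G[OF u_pos u_lt1 h(3) h(5) x2] G1 1 unfolding Gineq_def
      by (simp add: alphaW_eq betaW_eq)
  next
    case 2
    have x2: "a\<^sup>2 + 1\<^sup>2 < 2" using h by (simp add: power_less_one_iff)
    show ?thesis using G[OF h(1,2) h(1) zero_less_one x2] H[OF h(1,2)] 2 k
      by (simp add: alphaW_eq betaW_eq)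
  next
    case 3
    have x2: "1\<^sup>2 + (a * y / x)\<^sup>2 < 2" using b_lt1 b_pos by (simp add: power_less_one_iff)
    have HH: "(1 + a * y / x)\<^sup>2 + sqrt (1 + a * y / x) / sqrt (1 - a * y / x) * (1 - a * y / x)\<^sup>2
        \<le> 2 * sqrt (1\<^sup>2 + (a * y / x)\<^sup>2) * sqrt (1 + a * y / x)"
      using H[OF b_pos b_lt1] by (simp add: add.commute power2_commute)
    have k1: "k1 - 1 \<noteq> 0" using 3 k by simp
    show ?thesis using G[OF b_pos b_lt1 zero_less_one b_pos x2] HH 3 k k1
      by (simp add: alphaW_eq betaW_eq)
  next
    case 4
    have k1: "k1 - 1 \<noteq> 0" using 4 k by simp
    show ?thesis using 4 k k1 by (simp add: alphaW_eq betaW_eq psd2_def)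
  qed
qed

lemma blocks_iff: "blocks_psd ppi Dd Dc \<longleftrightarrow> Gineq"
proof
  assume b: "blocks_psd ppi Dd Dc"
  have "ppi (Inl (1, 0)) \<noteq> Inl (1, 0)" by simp
  then have "psd2 (Dd (Inl (1, 0))) (Dc (Inl (1, 0))) (Dd (ppi (Inl (1, 0))))"
    using b unfolding blocks_psd_def by blast
  then have "psd2 (Dd (Inl (1, 0))) (Dc (Inl (1, 0))) (Dd (Inr (1 - 1, 0 + 1)))" by simp
  then have ps: "psd2 (sd 1 1 (a * y / x * a) - sd (x\<^sup>2) (y\<^sup>2) (x * y)) (sc 1 1 (a * y / x * a) - sc (x\<^sup>2) (y\<^sup>2) (x * y))
      (sd 1 1 (a * y / x * a) - sd (y\<^sup>2) (x\<^sup>2) (x * y))"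
    using pair_vals[of 1 0] by (simp add: alphaW_eq betaW_eq)
  have x2: "x\<^sup>2 + y\<^sup>2 < 2" using h by (smt (verit) power_strict_mono zero_le_power2 power2_less_eq_zero_iff one_power2 power_less_one_iff)
  show Gineq using G[OF u_pos u_lt1 h(3) h(5) x2] ps unfolding Gineq_def by simp
next
  assume G1: Gineq
  have cfD: "cfok ppi Dc"
    by (rule cfok_diff[OF sq_cfok[OF invol_ppi cfok_cL] sq_cfok[OF invol_ppi cfok_cR]])
  show "blocks_psd ppi Dd Dc"
    unfolding blocks_psd_def
  proof (intro allI conjI impI)
    fix j
    show "0 \<le> Dd j" if "ppi j = j" using fixed_ok that by blast
    show "psd2 (Dd j) (Dc j) (Dd (ppi j))" if nf: "ppi j \<noteq> j"
    proof (cases j rule: ppi.cases)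
      case (1 k1 k2)
      then have k: "k1 \<noteq> 0" using nf by (auto split: if_splits)
      show ?thesis using inl_case[OF G1 k, of k2] 1 k by simp
    next
      case (2 j1 j2)
      then have k: "j2 \<noteq> 0" using nf by (auto split: if_splits)
      have "psd2 (Dd (Inl (j1 + 1, j2 - 1))) (Dc (Inl (j1 + 1, j2 - 1))) (Dd (Inr (j1 + 1 - 1, j2 - 1 + 1)))"
        by (rule inl_case[OF G1]) simp
      moreover have "Dc (Inl (j1 + 1, j2 - 1)) = Dc (Inr (j1, j2))"
        using cfD unfolding cfok_def using k by (metis ppi.simps(2))
      ultimately show ?thesis using 2 k by (simp add: psd2_swap)
    qed
  qed
qed

lemma final_alg:
  "(a\<^sup>2 \<le> x * (4*x\<^sup>2 - x^4 + 4*x^3*y + 4*y\<^sup>2 - 6*x\<^sup>2*y\<^sup>2 + 4*x*y^3 - y^4) / (4*y*(x\<^sup>2 + y\<^sup>2)) \<and>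
     sqrt ((x\<^sup>2 + y\<^sup>2) * (x + a\<^sup>2*y) / x) \<ge>
       (x + y)\<^sup>2 / 2 + sqrt ((x + a\<^sup>2*y) * (x - y)^4 / (4 * (x - a\<^sup>2*y)))) \<longleftrightarrow> Gineq"
proof -
  define u where "u = a * y / x * a"
  define P where "P = sqrt (1 + u)"
  define Q where "Q = sqrt (1 - u)"
  define n where "n = sqrt (x\<^sup>2 + y\<^sup>2)"
  have u0: "0 < u" "u < 1" using u_pos u_lt1 by (simp_all add: u_def)
  have P0: "P > 0" and Q0: "Q > 0" using u0 by (simp_all add: P_def Q_def)
  have P2: "P\<^sup>2 = 1 + u" and Q2: "Q\<^sup>2 = 1 - u" using u0 by (simp_all add: P_def Q_def)
  have n0: "n > 0" unfolding n_def using h by (intro real_sqrt_gt_zero add_pos_pos) simp_all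
  have n2: "n\<^sup>2 = x\<^sup>2 + y\<^sup>2" unfolding n_def by simp
  have xa: "x - a\<^sup>2 * y > 0"
  proof -
    have "a\<^sup>2 * y = a * (a * y)" by (simp add: power2_eq_square)
    also have "\<dots> < 1 * x" using h by (intro mult_strict_mono) auto
    finally show ?thesis by simp
  qed
  have e1: "sqrt ((x\<^sup>2 + y\<^sup>2) * (x + a\<^sup>2*y) / x) = n * P"
  proof -
    have "(x\<^sup>2 + y\<^sup>2) * (x + a\<^sup>2*y) / x = (x\<^sup>2 + y\<^sup>2) * (1 + u)"
      unfolding u_def using h by (simp add: field_simps power2_eq_square)
    then show ?thesis unfolding n_def P_def by (simp add: real_sqrt_mult)
  qed
  have e2: "sqrt ((x + a\<^sup>2*y) * (x - y)^4 / (4 * (x - a\<^sup>2*y))) = (x - y)\<^sup>2 / 2 * (P / Q)"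
  proof -
    have "(x + a\<^sup>2*y) * (x - y)^4 / (4 * (x - a\<^sup>2*y)) = ((x - y)\<^sup>2 / 2)\<^sup>2 * ((1 + u) / (1 - u))"
    proof -
      have A: "(1 + u) / (1 - u) = (x + a\<^sup>2*y) / (x - a\<^sup>2*y)"
        unfolding u_def using h xa by (simp add: field_simps power2_eq_square)
      have B: "((x - y)\<^sup>2 / 2)\<^sup>2 = (x - y)^4 / 4" by (simp add: power2_eq_square power4_eq_xxxx)
      show ?thesis unfolding A B using xa by (simp add: field_simps)
    qed
    then show ?thesis unfolding P_def Q_def by (simp add: real_sqrt_mult real_sqrt_divide)
  qed
  have GI: "Gineq \<longleftrightarrow> (x + y)\<^sup>2 + P / Q * (x - y)\<^sup>2 \<le> 2 * n * P"
    unfolding Gineq_def P_def Q_def n_def u_def ..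
  have c2: "(sqrt ((x\<^sup>2 + y\<^sup>2) * (x + a\<^sup>2*y) / x) \<ge> (x + y)\<^sup>2 / 2 + sqrt ((x + a\<^sup>2*y) * (x - y)^4 / (4 * (x - a\<^sup>2*y))))
     \<longleftrightarrow> Gineq"
    unfolding e1 e2 GI by (simp add: field_simps)
  have c1: "a\<^sup>2 \<le> x * (4*x\<^sup>2 - x^4 + 4*x^3*y + 4*y\<^sup>2 - 6*x\<^sup>2*y\<^sup>2 + 4*x*y^3 - y^4) / (4*y*(x\<^sup>2 + y\<^sup>2))"
    if G1: Gineq
  proof -
    have "P / Q * (x - y)\<^sup>2 < 2 * n * P"
    proof -
      have "(x + y)\<^sup>2 > 0" using h by simp
      then show ?thesis using G1 GI by linarith
    qed
    then have "(x - y)\<^sup>2 < 2 * n * Q" using P0 Q0 by (simp add: field_simps)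
    then have "((x - y)\<^sup>2)\<^sup>2 \<le> (2 * n * Q)\<^sup>2" using zero_le_power2[of "x - y"]
      by (intro power_mono) simp_all
    then have "(x - y)^4 \<le> 4 * (x\<^sup>2 + y\<^sup>2) * (1 - u)"
      by (simp add: power_mult_distrib n2 Q2 flip: power_mult)
    then have "4 * (x\<^sup>2 + y\<^sup>2) * (a\<^sup>2 * y / x) \<le> 4 * (x\<^sup>2 + y\<^sup>2) - (x - y)^4"
      unfolding u_def by (simp add: power2_eq_square algebra_simps)
    then have "4 * (x\<^sup>2 + y\<^sup>2) * (a\<^sup>2 * y) \<le> x * (4 * (x\<^sup>2 + y\<^sup>2) - (x - y)^4)"
      using h by (simp add: field_simps)
    moreover have "4 * (x\<^sup>2 + y\<^sup>2) - (x - y)^4 = 4*x\<^sup>2 - x^4 + 4*x^3*y + 4*y\<^sup>2 - 6*x\<^sup>2*y\<^sup>2 + 4*x*y^3 - y^4"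
      by (simp add: power2_eq_square power4_eq_xxxx power3_eq_cube algebra_simps)
    moreover have "4 * y * (x\<^sup>2 + y\<^sup>2) > 0" using h by (simp add: add_pos_pos)
    ultimately show ?thesis by (simp add: pos_le_divide_eq algebra_simps)
  qed
  show ?thesis using c1 c2 by blast
qed

end


theorem theorem3p16:
  fixes a x y :: real
  assumes "0 < a" "a < 1" "0 < x" "x < 1" "0 < y" "y < 1" "a * y < x"
  shows "semi_hyponormal (W1 a x y) (W2 a x y) \<longleftrightarrow>
    (a\<^sup>2 \<le> x * (4*x\<^sup>2 - x^4 + 4*x^3*y + 4*y\<^sup>2 - 6*x\<^sup>2*y\<^sup>2 + 4*x*y^3 - y^4) / (4*y*(x\<^sup>2 + y\<^sup>2)) \<and>
     sqrt ((x\<^sup>2 + y\<^sup>2) * (x + a\<^sup>2*y) / x) \<ge>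
       (x + y)\<^sup>2 / 2 + sqrt ((x + a\<^sup>2*y) * (x - y)^4 / (4 * (x - a\<^sup>2*y))))"
proof -
  have "semi_hyponormal (W1 a x y) (W2 a x y) \<longleftrightarrow>
    blocks_psd ppi
      (\<lambda>j. sqd ppi (dLw (alphaW a x y) (betaW a x y)) (cLw (alphaW a x y) (betaW a x y)) j
         - sqd ppi (dRw (alphaW a x y) (betaW a x y)) (cRw (alphaW a x y) (betaW a x y)) j)
      (\<lambda>j. sqc ppi (dLw (alphaW a x y) (betaW a x y)) (cLw (alphaW a x y) (betaW a x y)) j
         - sqc ppi (dRw (alphaW a x y) (betaW a x y)) (cRw (alphaW a x y) (betaW a x y)) j)"
    unfolding W1_def W2_def by (rule shn_iff[OF wa[OF assms] wbb[OF assms] psdLc[OF assms]])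
  also have "\<dots> \<longleftrightarrow> Gineq a x y" by (rule blocks_iff[OF assms])
  also have "\<dots> \<longleftrightarrow> (a\<^sup>2 \<le> x * (4*x\<^sup>2 - x^4 + 4*x^3*y + 4*y\<^sup>2 - 6*x\<^sup>2*y\<^sup>2 + 4*x*y^3 - y^4) / (4*y*(x\<^sup>2 + y\<^sup>2)) \<and>
     sqrt ((x\<^sup>2 + y\<^sup>2) * (x + a\<^sup>2*y) / x) \<ge>
       (x + y)\<^sup>2 / 2 + sqrt ((x + a\<^sup>2*y) * (x - y)^4 / (4 * (x - a\<^sup>2*y))))"
    by (rule final_alg[OF assms, symmetric])
  finally show ?thesis .
qed

end
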